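(* Let $T$ be a split Leibniz triple system with symmetric root system $\Lambda^1$, and suppose $\Lambda^0$ is symmetric. Then: (1) for every $\alpha_0\in\Lambda^1$, the subspace $T_{\Lambda^1_{\alpha_0}}=T_{0,\Lambda^1_{\alpha_0}}\oplus V_{\Lambda^1_{\alpha_0}}$ is an ideal of $T$, where $T_{0,\Lambda^1_{\alpha_0}}=\mathrm{span}_{\mathbb{K}}\{\{T_\alpha,T_\beta,T_\gamma\}:\alpha+\beta+\gamma=0,\ \alpha,\beta,\gamma\in\Lambda^1_{\alpha_0}\cup\{0\}\}\subseteq T_0$ and $V_{\Lambda^1_{\alpha_0}}=\bigoplus_{\gamma\in\Lambda^1_{\alpha_0}}T_\gamma$; (2) if $T$ is simple, then any two roots $\alpha,\beta\in\Lambda^1$ are connected (there is a connection from $\alpha$ to $\beta$).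
   Context: A Leibniz triple system is a vector space $T$ over a field $\mathbb{K}$ with a trilinear product $\{\cdot,\cdot,\cdot\}$ satisfying, for all $a,b,c,d,e\in T$: $\{a,\{b,c,d\},e\}=\{\{a,b,c\},d,e\}-\{\{a,c,b\},d,e\}-\{\{a,d,b\},c,e\}+\{\{a,d,c\},b,e\}$ and $\{a,b,\{c,d,e\}\}=\{\{a,b,c\},d,e\}-\{\{a,b,d\},c,e\}-\{\{a,b,e\},c,d\}+\{\{a,b,e\},d,c\}$. An ideal of $T$ is a subspace $I$ with $\{I,T,T\}+\{T,I,T\}+\{T,T,I\}\subseteq I$. Let $J$ be the ideal of $T$ generated by $\{\{a,b,c\}-\{a,c,b\}+\{b,c,a\}:a,b,c\in T\}$. $T$ is simple if its product is nonzero and its only ideals are $\{0\}$, $J$ and $T$. Its standard embedding is the right Leibniz algebra $L=L^0\oplus L^1$ ($L^0$ the span of symbols $x\otimes y$, $L^1=T$) with product $[(x\otimes y,z),(u\otimes v,w)]=(\{x,y,u\}\otimes v-\{x,y,v\}\otimes u+z\otimes w,\ \{x,y,w\}+\{z,u,v\}-\{z,v,u\})$; so $[x,y]=x\otimes y$ and $\{x,y,z\}=[[x,y],z]$ for $x,y,z\in T$. Let $H^0$ be a maximal abelian subalgebra of $L^0$; for $\alpha\in(H^0)^*$ put $T_\alpha=\{t\in T:[t,h]=\alpha(h)t\ \forall h\in H^0\}$, $L^0_\alpha=\{v\in L^0:[v,h]=\alpha(h)v\ \forall h\in H^0\}$, $\Lambda^1=\{\alpha\neq0:T_\alpha\neq0\}$,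 $\Lambda^0=\{\alpha\neq0:L^0_\alpha\neq0\}$. $T$ is split (w.r.t. $H^0$) if $T=T_0\oplus\bigoplus_{\alpha\in\Lambda^1}T_\alpha$, $\{T_0,T_0,T_0\}=0$ and $\{T_\alpha,T_{-\alpha},T_0\}=0$ for all $\alpha\in\Lambda^1$. A set $\Lambda\subset(H^0)^*$ is symmetric if $\alpha\in\Lambda$ implies $-\alpha\in\Lambda$. Two roots $\alpha,\beta\in\Lambda^1$ are connected if there is a family $\alpha_1,\dots,\alpha_{2n+1}\in\Lambda^1\cup\{0\}$ with: $\alpha_1+\dots+\alpha_{2k+1}\in\Lambda^1$ for $k=0,\dots,n$; $\alpha_1+\dots+\alpha_{2k}\in\Lambda^0$ for $k=1,\dots,n$; $\alpha_1=\alpha$ and $\alpha_1+\dots+\alpha_{2n+1}\in\{\beta,-\beta\}$. $\Lambda^1_{\alpha_0}$ denotes the set of $\beta\in\Lambda^1$ connected with $\alpha_0$. *)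

theory Defs
  imports Main "HOL.Vector_Spaces"
begin

definition trilinear :: "('k::field \<Rightarrow> 'v::ab_group_add \<Rightarrow> 'v) \<Rightarrow> ('v \<Rightarrow> 'v \<Rightarrow> 'v \<Rightarrow> 'v) \<Rightarrow> bool" where
  "trilinear sc tp \<longleftrightarrow>
     (\<forall>b c. Vector_Spaces.linear sc sc (\<lambda>a. tp a b c)) \<and>
     (\<forall>a c. Vector_Spaces.linear sc sc (\<lambda>b. tp a b c)) \<and>
     (\<forall>a b. Vector_Spaces.linear sc sc (\<lambda>c. tp a b c))"

definition leibniz_triple_system :: "('k::field \<Rightarrow> 'v::ab_group_add \<Rightarrow> 'v) \<Rightarrow> ('v \<Rightarrow> 'v \<Rightarrow> 'v \<Rightarrow> 'v) \<Rightarrow> bool" where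
  "leibniz_triple_system sc tp \<longleftrightarrow>
     vector_space sc \<and> trilinear sc tp \<and>
     (\<forall>a b c d e. tp a (tp b c d) e =
         tp (tp a b c) d e - tp (tp a c b) d e - tp (tp a d b) c e + tp (tp a d c) b e) \<and>
     (\<forall>a b c d e. tp a b (tp c d e) =
         tp (tp a b c) d e - tp (tp a b d) c e - tp (tp a b e) c d + tp (tp a b e) d c)"

definition lts_ideal :: "('k::field \<Rightarrow> 'v::ab_group_add \<Rightarrow> 'v) \<Rightarrow> ('v \<Rightarrow> 'v \<Rightarrow> 'v \<Rightarrow> 'v) \<Rightarrow> 'v set \<Rightarrow> bool" where
  "lts_ideal sc tp I \<longleftrightarrow> module.subspace sc I \<and>
     (\<forall>x\<in>I. \<forall>y z. tp x y z \<in> I \<and> tp y x z \<in> I \<and> tp y z x \<in> I)"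

definition lts_J :: "('k::field \<Rightarrow> 'v::ab_group_add \<Rightarrow> 'v) \<Rightarrow> ('v \<Rightarrow> 'v \<Rightarrow> 'v \<Rightarrow> 'v) \<Rightarrow> 'v set" where
  "lts_J sc tp = \<Inter> {I. lts_ideal sc tp I \<and>
      {tp a b c - tp a c b + tp b c a | a b c. True} \<subseteq> I}"

definition lts_simple :: "('k::field \<Rightarrow> 'v::ab_group_add \<Rightarrow> 'v) \<Rightarrow> ('v \<Rightarrow> 'v \<Rightarrow> 'v \<Rightarrow> 'v) \<Rightarrow> bool" where
  "lts_simple sc tp \<longleftrightarrow> (\<exists>a b c. tp a b c \<noteq> 0) \<and>
     (\<forall>I. lts_ideal sc tp I \<longrightarrow> I = {0} \<or> I = lts_J sc tp \<or> I = UNIV)"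

text \<open>
  The even part L0 of the standard embedding.  An element \<Sum> x_i \<otimes> y_i of L0 is
  represented by the pair of operators through which it acts on T:
  (w \<mapsto> [\<Sum> x_i\<otimes>y_i, w] = \<Sum> {x_i,y_i,w},  z \<mapsto> [z, \<Sum> x_i\<otimes>y_i] = \<Sum> ({z,x_i,y_i} - {z,y_i,x_i})).
  Scalars are absorbed into the first tensor factor, so finite lists of pairs suffice.
\<close>

type_synonym 'v l0 = "('v \<Rightarrow> 'v) \<times> ('v \<Rightarrow> 'v)"

definition l0_of :: "('v::ab_group_add \<Rightarrow> 'v \<Rightarrow> 'v \<Rightarrow> 'v) \<Rightarrow> ('v \<times> 'v) list \<Rightarrow> 'v l0" where
  "l0_of tp ps = ((\<lambda>w. sum_list (map (\<lambda>(x,y). tp x y w) ps)),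
                  (\<lambda>z. sum_list (map (\<lambda>(x,y). tp z x y - tp z y x) ps)))"

definition L0 :: "('v::ab_group_add \<Rightarrow> 'v \<Rightarrow> 'v \<Rightarrow> 'v) \<Rightarrow> 'v l0 set" where
  "L0 tp = range (l0_of tp)"

definition l0_zero :: "'v::ab_group_add l0" where
  "l0_zero = ((\<lambda>_. 0), (\<lambda>_. 0))"

definition l0_add :: "'v::ab_group_add l0 \<Rightarrow> 'v l0 \<Rightarrow> 'v l0" where
  "l0_add l m = ((\<lambda>w. fst l w + fst m w), (\<lambda>z. snd l z + snd m z))"

definition l0_scale :: "('k \<Rightarrow> 'v \<Rightarrow> 'v) \<Rightarrow> 'k \<Rightarrow> 'v l0 \<Rightarrow> 'v l0" where
  "l0_scale sc c l = ((\<lambda>w. sc c (fst l w)), (\<lambda>z. sc c (snd l z)))"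

text \<open>Product [x\<otimes>y, u\<otimes>v] = {x,y,u}\<otimes>v - {x,y,v}\<otimes>u, extended bilinearly; the left factor
  l = \<Sum> x_i\<otimes>y_i enters only through w \<mapsto> \<Sum>{x_i,y_i,w} = fst l w.  The right factor is
  evaluated on a chosen representative (the product is well defined on L0).\<close>
definition l0_bracket :: "('v::ab_group_add \<Rightarrow> 'v \<Rightarrow> 'v \<Rightarrow> 'v) \<Rightarrow> 'v l0 \<Rightarrow> 'v l0 \<Rightarrow> 'v l0" where
  "l0_bracket tp l m =
     l0_of tp (concat (map (\<lambda>(u,v). [(fst l u, v), (- fst l v, u)])
                          (SOME ps. l0_of tp ps = m)))"

definition l0_subspace :: "('k::field \<Rightarrow> 'v::ab_group_add \<Rightarrow> 'v) \<Rightarrow> ('v \<Rightarrow> 'v \<Rightarrow> 'v \<Rightarrow> 'v) \<Rightarrow> 'v l0 set \<Rightarrow> bool" where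
  "l0_subspace sc tp H \<longleftrightarrow> H \<subseteq> L0 tp \<and> l0_zero \<in> H \<and>
     (\<forall>h\<in>H. \<forall>h'\<in>H. l0_add h h' \<in> H) \<and> (\<forall>c. \<forall>h\<in>H. l0_scale sc c h \<in> H)"

definition abelian_subalgebra :: "('k::field \<Rightarrow> 'v::ab_group_add \<Rightarrow> 'v) \<Rightarrow> ('v \<Rightarrow> 'v \<Rightarrow> 'v \<Rightarrow> 'v) \<Rightarrow> 'v l0 set \<Rightarrow> bool" where
  "abelian_subalgebra sc tp H \<longleftrightarrow> l0_subspace sc tp H \<and>
     (\<forall>h\<in>H. \<forall>h'\<in>H. l0_bracket tp h h' \<in> H) \<and>
     (\<forall>h\<in>H. \<forall>h'\<in>H. l0_bracket tp h h' = l0_zero)"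

definition maximal_abelian_subalgebra :: "('k::field \<Rightarrow> 'v::ab_group_add \<Rightarrow> 'v) \<Rightarrow> ('v \<Rightarrow> 'v \<Rightarrow> 'v \<Rightarrow> 'v) \<Rightarrow> 'v l0 set \<Rightarrow> bool" where
  "maximal_abelian_subalgebra sc tp H \<longleftrightarrow> abelian_subalgebra sc tp H \<and>
     (\<forall>H'. abelian_subalgebra sc tp H' \<and> H \<subseteq> H' \<longrightarrow> H' = H)"

definition dualH :: "('k::field \<Rightarrow> 'v::ab_group_add \<Rightarrow> 'v) \<Rightarrow> 'v l0 set \<Rightarrow> ('v l0 \<Rightarrow> 'k) set" where
  "dualH sc H = {\<alpha>. (\<forall>h\<in>H. \<forall>h'\<in>H. \<alpha> (l0_add h h') = \<alpha> h + \<alpha> h') \<and>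
                    (\<forall>c. \<forall>h\<in>H. \<alpha> (l0_scale sc c h) = c * \<alpha> h) \<and>
                    (\<forall>h. h \<notin> H \<longrightarrow> \<alpha> h = 0)}"

text \<open>T_alpha = {t. [t,h] = alpha(h) t for all h in H0}, where [t,h] = snd h t.\<close>
definition Troot :: "('k::field \<Rightarrow> 'v::ab_group_add \<Rightarrow> 'v) \<Rightarrow> 'v l0 set \<Rightarrow> ('v l0 \<Rightarrow> 'k) \<Rightarrow> 'v set" where
  "Troot sc H \<alpha> = {t. \<forall>h\<in>H. snd h t = sc (\<alpha> h) t}"

definition L0root :: "('k::field \<Rightarrow> 'v::ab_group_add \<Rightarrow> 'v) \<Rightarrow> ('v \<Rightarrow> 'v \<Rightarrow> 'v \<Rightarrow> 'v) \<Rightarrow> 'v l0 set \<Rightarrow> ('v l0 \<Rightarrow> 'k) \<Rightarrow> 'v l0 set" where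
  "L0root sc tp H \<alpha> = {v \<in> L0 tp. \<forall>h\<in>H. l0_bracket tp v h = l0_scale sc (\<alpha> h) v}"

definition Lambda1 :: "('k::field \<Rightarrow> 'v::ab_group_add \<Rightarrow> 'v) \<Rightarrow> 'v l0 set \<Rightarrow> ('v l0 \<Rightarrow> 'k) set" where
  "Lambda1 sc H = {\<alpha> \<in> dualH sc H. \<alpha> \<noteq> (\<lambda>_. 0) \<and> Troot sc H \<alpha> \<noteq> {0}}"

definition Lambda0 :: "('k::field \<Rightarrow> 'v::ab_group_add \<Rightarrow> 'v) \<Rightarrow> ('v \<Rightarrow> 'v \<Rightarrow> 'v \<Rightarrow> 'v) \<Rightarrow> 'v l0 set \<Rightarrow> ('v l0 \<Rightarrow> 'k) set" where
  "Lambda0 sc tp H = {\<alpha> \<in> dualH sc H. \<alpha> \<noteq> (\<lambda>_. 0) \<and> L0root sc tp H \<alpha> \<noteq> {l0_zero}}"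

definition symmetric_roots :: "('a \<Rightarrow> 'k::ab_group_add) set \<Rightarrow> bool" where
  "symmetric_roots \<Lambda> \<longleftrightarrow> (\<forall>\<alpha>\<in>\<Lambda>. (\<lambda>h. - \<alpha> h) \<in> \<Lambda>)"

definition split_lts :: "('k::field \<Rightarrow> 'v::ab_group_add \<Rightarrow> 'v) \<Rightarrow> ('v \<Rightarrow> 'v \<Rightarrow> 'v \<Rightarrow> 'v) \<Rightarrow> 'v l0 set \<Rightarrow> bool" where
  "split_lts sc tp H \<longleftrightarrow>
     (\<forall>t. \<exists>S f. finite S \<and> S \<subseteq> insert (\<lambda>_. 0) (Lambda1 sc H) \<and>
               (\<forall>\<alpha>\<in>S. f \<alpha> \<in> Troot sc H \<alpha>) \<and> t = (\<Sum>\<alpha>\<in>S. f \<alpha>)) \<and>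
     (\<forall>S f. finite S \<and> S \<subseteq> insert (\<lambda>_. 0) (Lambda1 sc H) \<and>
               (\<forall>\<alpha>\<in>S. f \<alpha> \<in> Troot sc H \<alpha>) \<and> (\<Sum>\<alpha>\<in>S. f \<alpha>) = 0 \<longrightarrow> (\<forall>\<alpha>\<in>S. f \<alpha> = 0)) \<and>
     (\<forall>a\<in>Troot sc H (\<lambda>_. 0). \<forall>b\<in>Troot sc H (\<lambda>_. 0). \<forall>c\<in>Troot sc H (\<lambda>_. 0). tp a b c = 0) \<and>
     (\<forall>\<alpha>\<in>Lambda1 sc H. \<forall>a\<in>Troot sc H \<alpha>. \<forall>b\<in>Troot sc H (\<lambda>h. - \<alpha> h).
         \<forall>c\<in>Troot sc H (\<lambda>_. 0). tp a b c = 0)"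

definition psum :: "(nat \<Rightarrow> 'a \<Rightarrow> 'k::comm_monoid_add) \<Rightarrow> nat \<Rightarrow> 'a \<Rightarrow> 'k" where
  "psum a m = (\<lambda>h. \<Sum>i\<in>{1..m}. a i h)"

definition connected_roots :: "('k::field \<Rightarrow> 'v::ab_group_add \<Rightarrow> 'v) \<Rightarrow> ('v \<Rightarrow> 'v \<Rightarrow> 'v \<Rightarrow> 'v) \<Rightarrow> 'v l0 set \<Rightarrow> ('v l0 \<Rightarrow> 'k) \<Rightarrow> ('v l0 \<Rightarrow> 'k) \<Rightarrow> bool" where
  "connected_roots sc tp H \<alpha> \<beta> \<longleftrightarrow>
     (\<exists>n::nat. \<exists>a::nat \<Rightarrow> 'v l0 \<Rightarrow> 'k.
        (\<forall>i\<in>{1..2*n+1}. a i \<in> insert (\<lambda>_. 0) (Lambda1 sc H)) \<and>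
        (\<forall>k\<le>n. psum a (2*k+1) \<in> Lambda1 sc H) \<and>
        (\<forall>k\<in>{1..n}. psum a (2*k) \<in> Lambda0 sc tp H) \<and>
        a 1 = \<alpha> \<and>
        (psum a (2*n+1) = \<beta> \<or> psum a (2*n+1) = (\<lambda>h. - \<beta> h)))"

definition conn_class :: "('k::field \<Rightarrow> 'v::ab_group_add \<Rightarrow> 'v) \<Rightarrow> ('v \<Rightarrow> 'v \<Rightarrow> 'v \<Rightarrow> 'v) \<Rightarrow> 'v l0 set \<Rightarrow> ('v l0 \<Rightarrow> 'k) \<Rightarrow> ('v l0 \<Rightarrow> 'k) set" where
  "conn_class sc tp H \<alpha>0 = {\<beta> \<in> Lambda1 sc H. connected_roots sc tp H \<alpha>0 \<beta>}"

definition T0_part :: "('k::field \<Rightarrow> 'v::ab_group_add \<Rightarrow> 'v) \<Rightarrow> ('v \<Rightarrow> 'v \<Rightarrow> 'v \<Rightarrow> 'v) \<Rightarrow> 'v l0 set \<Rightarrow> ('v l0 \<Rightarrow> 'k) set \<Rightarrow> 'v set" where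
  "T0_part sc tp H \<Lambda> = module.span sc
     {tp x y z | x y z \<alpha> \<beta> \<gamma>. \<alpha> \<in> insert (\<lambda>_. 0) \<Lambda> \<and> \<beta> \<in> insert (\<lambda>_. 0) \<Lambda> \<and>
        \<gamma> \<in> insert (\<lambda>_. 0) \<Lambda> \<and> (\<lambda>h. \<alpha> h + \<beta> h + \<gamma> h) = (\<lambda>_. 0) \<and>
        x \<in> Troot sc H \<alpha> \<and> y \<in> Troot sc H \<beta> \<and> z \<in> Troot sc H \<gamma>}"

definition V_part :: "('k::field \<Rightarrow> 'v::ab_group_add \<Rightarrow> 'v) \<Rightarrow> 'v l0 set \<Rightarrow> ('v l0 \<Rightarrow> 'k) set \<Rightarrow> 'v set" where
  "V_part sc H \<Lambda> = module.span sc (\<Union>\<gamma>\<in>\<Lambda>. Troot sc H \<gamma>)"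

definition T_Lambda :: "('k::field \<Rightarrow> 'v::ab_group_add \<Rightarrow> 'v) \<Rightarrow> ('v \<Rightarrow> 'v \<Rightarrow> 'v \<Rightarrow> 'v) \<Rightarrow> 'v l0 set \<Rightarrow> ('v l0 \<Rightarrow> 'k) set \<Rightarrow> 'v set" where
  "T_Lambda sc tp H \<Lambda> = {x + y | x y. x \<in> T0_part sc tp H \<Lambda> \<and> y \<in> V_part sc H \<Lambda>}"

end

theory Submission imports Defs "HOL-Library.Function_Algebras" begin

locale LTSc =
  fixes sc :: "'k::field \<Rightarrow> 'v::ab_group_add \<Rightarrow> 'v" and tp :: "'v \<Rightarrow> 'v \<Rightarrow> 'v \<Rightarrow> 'v"
  assumes lts: "leibniz_triple_system sc tp"
begin

lemma vs: "vector_space sc" using lts unfolding leibniz_triple_system_def by blast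

sublocale vs: vector_space sc by (rule vs)

lemma lin1: "module_hom sc sc (\<lambda>a. tp a b c)" using lts
  unfolding leibniz_triple_system_def trilinear_def module_hom_iff_linear by blast
lemma lin2: "module_hom sc sc (\<lambda>b. tp a b c)" using lts
  unfolding leibniz_triple_system_def trilinear_def module_hom_iff_linear by blast
lemma lin3: "module_hom sc sc (\<lambda>c. tp a b c)" using lts
  unfolding leibniz_triple_system_def trilinear_def module_hom_iff_linear by blast

lemma tp_add1: "tp (x + y) b c = tp x b c + tp y b c" using module_hom.add[OF lin1] .
lemma tp_add2: "tp a (x + y) c = tp a x c + tp a y c" using module_hom.add[OF lin2] .
lemma tp_add3: "tp a b (x + y) = tp a b x + tp a b y" using module_hom.add[OF lin3] .
lemma tp_diff1: "tp (x - y) b c = tp x b c - tp y b c" using module_hom.diff[OF lin1] .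
lemma tp_diff2: "tp a (x - y) c = tp a x c - tp a y c" using module_hom.diff[OF lin2] .
lemma tp_diff3: "tp a b (x - y) = tp a b x - tp a b y" using module_hom.diff[OF lin3] .
lemma tp_neg1: "tp (- x) b c = - tp x b c" using module_hom.neg[OF lin1] .
lemma tp_neg2: "tp a (- x) c = - tp a x c" using module_hom.neg[OF lin2] .
lemma tp_neg3: "tp a b (- x) = - tp a b x" using module_hom.neg[OF lin3] .
lemma tp_zero1[simp]: "tp 0 b c = 0" using module_hom.zero[OF lin1] .
lemma tp_zero2[simp]: "tp a 0 c = 0" using module_hom.zero[OF lin2] .
lemma tp_zero3[simp]: "tp a b 0 = 0" using module_hom.zero[OF lin3] .
lemma tp_scale1: "tp (sc r x) b c = sc r (tp x b c)" using module_hom.scale[OF lin1] .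
lemma tp_scale2: "tp a (sc r x) c = sc r (tp a x c)" using module_hom.scale[OF lin2] .
lemma tp_scale3: "tp a b (sc r x) = sc r (tp a b x)" using module_hom.scale[OF lin3] .
lemma tp_sum1: "tp (sum f S) b c = (\<Sum>i\<in>S. tp (f i) b c)" using module_hom.sum[OF lin1] .
lemma tp_sum2: "tp a (sum f S) c = (\<Sum>i\<in>S. tp a (f i) c)" using module_hom.sum[OF lin2] .
lemma tp_sum3: "tp a b (sum f S) = (\<Sum>i\<in>S. tp a b (f i))" using module_hom.sum[OF lin3] .

lemmas tp_lin = tp_add1 tp_add2 tp_add3 tp_diff1 tp_diff2 tp_diff3 tp_neg1 tp_neg2 tp_neg3

lemma id1: "tp a (tp b c d) e =
         tp (tp a b c) d e - tp (tp a c b) d e - tp (tp a d b) c e + tp (tp a d c) b e"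
  using lts unfolding leibniz_triple_system_def by blast
lemma id2: "tp a b (tp c d e) =
         tp (tp a b c) d e - tp (tp a b d) c e - tp (tp a b e) c d + tp (tp a b e) d c"
  using lts unfolding leibniz_triple_system_def by blast

definition D :: "'v \<Rightarrow> 'v \<Rightarrow> 'v \<Rightarrow> 'v" where "D u v z = tp z u v - tp z v u"

lemma deriv1: "D u v (tp a b c) = tp (D u v a) b c + tp a (D u v b) c + tp a b (D u v c)"
  unfolding D_def tp_lin id2[of a b c u v] id2[of a b c v u] id1[of a b u v c] id1[of a b v u c]
  by (simp add: algebra_simps tp_lin)

lemma fst_pair: "tp (tp a b u) v w - tp (tp a b v) u w = tp (D u v a) b w + tp a (D u v b) w"
  unfolding D_def tp_lin id1[of a b u v w] id1[of a b v u w]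
  by (simp add: algebra_simps)

lemma snd_pair: "tp z (tp a b u) v - tp z v (tp a b u) - tp z (tp a b v) u + tp z u (tp a b v)
   = D u v (tp z a b - tp z b a) - (tp (D u v z) a b - tp (D u v z) b a)"
  unfolding D_def tp_lin id1[of z a b u v] id1[of z a b v u] 
        id2[of z v a b u] id2[of z u a b v]  
  by (simp add: algebra_simps)


definition Dl :: "('v \<times> 'v) list \<Rightarrow> 'v \<Rightarrow> 'v" where
  "Dl ps z = sum_list (map (\<lambda>(x,y). D x y z) ps)"

lemma Dl_Nil[simp]: "Dl [] z = 0" by (simp add: Dl_def)
lemma Dl_Cons[simp]: "Dl ((u,v)#ps) z = D u v z + Dl ps z" by (simp add: Dl_def)

lemma D_add: "D u v (x + y) = D u v x + D u v y" unfolding D_def tp_lin by (simp add: algebra_simps)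
lemma D_scale: "D u v (sc r x) = sc r (D u v x)" unfolding D_def tp_scale1 by (simp add: vs.scale_right_diff_distrib)
lemma D_zero[simp]: "D u v 0 = 0" unfolding D_def by simp
lemma D_diff: "D u v (x - y) = D u v x - D u v y" unfolding D_def tp_lin by (simp add: algebra_simps)

lemma Dl_add: "Dl ps (x + y) = Dl ps x + Dl ps y"
  by (induction ps) (auto simp: D_add algebra_simps)
lemma Dl_scale: "Dl ps (sc r x) = sc r (Dl ps x)"
  by (induction ps) (auto simp: D_scale vs.scale_right_distrib)
lemma Dl_zero[simp]: "Dl ps 0 = 0"
  by (induction ps) auto
lemma Dl_diff: "Dl ps (x - y) = Dl ps x - Dl ps y"
  by (induction ps) (auto simp: D_diff algebra_simps)

lemma Dl_deriv: "Dl ps (tp a b c) = tp (Dl ps a) b c + tp a (Dl ps b) c + tp a b (Dl ps c)"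
  by (induction ps) (auto simp: deriv1 tp_lin algebra_simps)

lemma snd_l0_of: "snd (l0_of tp ps) = Dl ps"
  unfolding l0_of_def Dl_def D_def by (auto simp: fun_eq_iff)

lemma fst_l0_of: "fst (l0_of tp ps) w = sum_list (map (\<lambda>(x,y). tp x y w) ps)"
  unfolding l0_of_def by simp

definition brl :: "'v \<Rightarrow> 'v \<Rightarrow> ('v \<times> 'v) list \<Rightarrow> ('v \<times> 'v) list" where
  "brl a b ps = concat (map (\<lambda>(u,v). [(tp a b u, v), (- tp a b v, u)]) ps)"

lemma brl_fst: "fst (l0_of tp (brl a b ps)) w = tp (Dl ps a) b w + tp a (Dl ps b) w"
proof (induction ps)
  case Nil then show ?case by (simp add: brl_def l0_of_def)
next
  case (Cons p ps)
  obtain u v where p: "p = (u,v)" by (cases p)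
  have "fst (l0_of tp (brl a b (p#ps))) w = tp (tp a b u) v w - tp (tp a b v) u w + fst (l0_of tp (brl a b ps)) w"
    by (simp add: p brl_def l0_of_def tp_neg1)
  also have "\<dots> = tp (D u v a) b w + tp a (D u v b) w + (tp (Dl ps a) b w + tp a (Dl ps b) w)"
    by (simp add: fst_pair Cons.IH)
  finally show ?case by (simp add: p tp_lin algebra_simps)
qed

lemma brl_snd: "snd (l0_of tp (brl a b ps)) z = Dl ps (tp z a b - tp z b a) - (tp (Dl ps z) a b - tp (Dl ps z) b a)"
proof (induction ps)
  case Nil then show ?case by (simp add: brl_def l0_of_def)
next
  case (Cons p ps)
  obtain u v where p: "p = (u,v)" by (cases p)
  have "snd (l0_of tp (brl a b (p#ps))) z = (tp z (tp a b u) v - tp z v (tp a b u) - tp z (tp a b v) u + tp z u (tp a b v)) + snd (l0_of tp (brl a b ps)) z"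
    by (simp add: p brl_def l0_of_def tp_neg2 tp_neg3 algebra_simps)
  also have "\<dots> = D u v (tp z a b - tp z b a) - (tp (D u v z) a b - tp (D u v z) b a) + (Dl ps (tp z a b - tp z b a) - (tp (Dl ps z) a b - tp (Dl ps z) b a))"
    by (simp only: snd_pair Cons.IH)
  finally show ?case by (simp add: p tp_lin algebra_simps)
qed

lemma bracket_pair: "l0_bracket tp (l0_of tp [(a,b)]) m = l0_of tp (brl a b (SOME ps. l0_of tp ps = m))"
  unfolding l0_bracket_def brl_def by (simp add: l0_of_def)

end

lemma lam_add: "(\<lambda>h. \<alpha> h + \<beta> h) = \<alpha> + \<beta>" by (simp add: fun_eq_iff)
lemma lam_add3: "(\<lambda>h. \<alpha> h + \<beta> h + \<gamma> h) = \<alpha> + \<beta> + \<gamma>" by (simp add: fun_eq_iff)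
lemma lam_neg: "(\<lambda>h. - \<alpha> h) = - \<alpha>" by (simp add: fun_eq_iff)
lemma lam_zero: "(\<lambda>_. 0) = 0" by (simp add: fun_eq_iff)

locale LTSH = LTSc sc tp for sc :: "'k::field \<Rightarrow> 'v::ab_group_add \<Rightarrow> 'v" and tp +
  fixes H :: "'v l0 set"
  assumes HL0: "H \<subseteq> L0 tp"
begin

abbreviation T where "T \<equiv> Troot sc H"

lemma H_rep: "h \<in> H \<Longrightarrow> \<exists>ps. h = l0_of tp ps"
  using HL0 unfolding L0_def by auto

lemma H_snd: "h \<in> H \<Longrightarrow> snd h = Dl (SOME ps. l0_of tp ps = h)"
  using H_rep[of h] by (metis (mono_tags, lifting) snd_l0_of someI_ex)

lemma T_sub: "vs.subspace (T \<mu>)"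
  unfolding vs.subspace_def Troot_def
  by (auto simp: H_snd Dl_add Dl_scale vs.scale_right_distrib mult.commute)

lemma T_zero[simp]: "0 \<in> T \<mu>" using T_sub vs.subspace_0 by blast

lemma T_prod: "a \<in> T \<alpha> \<Longrightarrow> b \<in> T \<beta> \<Longrightarrow> c \<in> T \<gamma> \<Longrightarrow> tp a b c \<in> T (\<alpha> + \<beta> + \<gamma>)"
  unfolding Troot_def
  by (auto simp: H_snd Dl_deriv tp_scale1 tp_scale2 tp_scale3 vs.scale_left_distrib)

lemma L0root_pair: assumes "a \<in> T \<alpha>" "b \<in> T \<beta>"
  shows "l0_of tp [(a,b)] \<in> L0root sc tp H (\<alpha> + \<beta>)"
  unfolding L0root_def
proof (safe)
  show "l0_of tp [(a, b)] \<in> L0 tp" unfolding L0_def by simp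
  fix h assume h: "h \<in> H"
  define ps where "ps = (SOME ps. l0_of tp ps = h)"
  have Da: "Dl ps a = sc (\<alpha> h) a" using assms(1) h unfolding Troot_def ps_def by (auto simp: H_snd)
  have Db: "Dl ps b = sc (\<beta> h) b" using assms(2) h unfolding Troot_def ps_def by (auto simp: H_snd)
  show "l0_bracket tp (l0_of tp [(a, b)]) h = l0_scale sc ((\<alpha> + \<beta>) h) (l0_of tp [(a, b)])"
    unfolding bracket_pair ps_def[symmetric] l0_scale_def
  proof (rule prod_eqI; rule ext)
    fix w show "fst (l0_of tp (brl a b ps)) w = fst ((\<lambda>w. sc ((\<alpha> + \<beta>) h) (fst (l0_of tp [(a, b)]) w)),
       (\<lambda>z. sc ((\<alpha> + \<beta>) h) (snd (l0_of tp [(a, b)]) z))) w"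
      by (simp only: fst_conv brl_fst Da Db) (simp add: tp_scale1 tp_scale2 fst_l0_of vs.scale_left_distrib)
  next
    fix z show "snd (l0_of tp (brl a b ps)) z = snd ((\<lambda>w. sc ((\<alpha> + \<beta>) h) (fst (l0_of tp [(a, b)]) w)),
       (\<lambda>z. sc ((\<alpha> + \<beta>) h) (snd (l0_of tp [(a, b)]) z))) z"
      apply (simp only: snd_conv brl_snd Dl_deriv Dl_diff Da Db)
      by (simp add: tp_scale1 tp_scale2 tp_scale3 snd_l0_of D_def
           vs.scale_left_distrib vs.scale_right_diff_distrib algebra_simps)
  qed
qed

end

locale LTSF = LTSH sc tp H for sc :: "'k::field \<Rightarrow> 'v::ab_group_add \<Rightarrow> 'v" and tp and H +
  assumes split: "split_lts sc tp H"
    and sym1: "symmetric_roots (Lambda1 sc H)"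
    and sym0: "symmetric_roots (Lambda0 sc tp H)"
begin

abbreviation L1 where "L1 \<equiv> Lambda1 sc H"
abbreviation L0s where "L0s \<equiv> Lambda0 sc tp H"
abbreviation R where "R \<equiv> insert 0 L1"

lemma L1_neg: "\<alpha> \<in> L1 \<Longrightarrow> - \<alpha> \<in> L1"
proof -
  assume a: "\<alpha> \<in> L1"
  have "(\<lambda>h. - \<alpha> h) \<in> L1" using sym1 a unfolding symmetric_roots_def by blast
  then show ?thesis by (subst (asm) lam_neg)
qed
lemma L0_neg: "\<alpha> \<in> L0s \<Longrightarrow> - \<alpha> \<in> L0s"
proof -
  assume a: "\<alpha> \<in> L0s"
  have "(\<lambda>h. - \<alpha> h) \<in> L0s" using sym0 a unfolding symmetric_roots_def by blast
  then show ?thesis by (subst (asm) lam_neg)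
qed
lemma R_neg: "\<alpha> \<in> R \<Longrightarrow> - \<alpha> \<in> R" using L1_neg by auto
lemma L1_nz: "\<alpha> \<in> L1 \<Longrightarrow> \<alpha> \<noteq> 0" unfolding Lambda1_def lam_zero by auto
lemma L1_dual: "\<alpha> \<in> L1 \<Longrightarrow> \<alpha> \<in> dualH sc H" unfolding Lambda1_def by auto
lemma dual_add: "\<alpha> \<in> dualH sc H \<Longrightarrow> \<beta> \<in> dualH sc H \<Longrightarrow> \<alpha> + \<beta> \<in> dualH sc H"
  unfolding dualH_def by (auto simp: algebra_simps)
lemma dual_neg: "\<alpha> \<in> dualH sc H \<Longrightarrow> - \<alpha> \<in> dualH sc H"
  unfolding dualH_def by (auto simp: algebra_simps)
lemma dual_zero: "0 \<in> dualH sc H"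
  unfolding dualH_def by (auto simp: algebra_simps)
lemma R_dual: "\<alpha> \<in> R \<Longrightarrow> \<alpha> \<in> dualH sc H" using L1_dual dual_zero by auto

lemma T_nonroot: "\<mu> \<in> dualH sc H \<Longrightarrow> x \<in> T \<mu> \<Longrightarrow> x \<noteq> 0 \<Longrightarrow> \<mu> \<in> R"
  unfolding Lambda1_def lam_zero by auto

lemma prod_root: "a \<in> T \<alpha> \<Longrightarrow> b \<in> T \<beta> \<Longrightarrow> c \<in> T \<gamma> \<Longrightarrow> \<alpha> \<in> R \<Longrightarrow> \<beta> \<in> R \<Longrightarrow> \<gamma> \<in> R
  \<Longrightarrow> tp a b c \<noteq> 0 \<Longrightarrow> \<alpha> + \<beta> + \<gamma> \<in> R"
proof -
  assume h: "a \<in> T \<alpha>" "b \<in> T \<beta>" "c \<in> T \<gamma>" "\<alpha> \<in> R" "\<beta> \<in> R" "\<gamma> \<in> R" "tp a b c \<noteq> 0"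
  have "\<alpha> + \<beta> + \<gamma> \<in> dualH sc H" using h by (intro dual_add R_dual)
  then show ?thesis using T_nonroot T_prod h by blast
qed

lemma L0s_pair: "\<alpha> \<in> R \<Longrightarrow> \<beta> \<in> R \<Longrightarrow> a \<in> T \<alpha> \<Longrightarrow> b \<in> T \<beta> \<Longrightarrow> \<alpha> + \<beta> \<noteq> 0
   \<Longrightarrow> l0_of tp [(a,b)] \<noteq> l0_zero \<Longrightarrow> \<alpha> + \<beta> \<in> L0s"
proof -
  assume h: "\<alpha> \<in> R" "\<beta> \<in> R" "a \<in> T \<alpha>" "b \<in> T \<beta>" "\<alpha> + \<beta> \<noteq> 0" "l0_of tp [(a,b)] \<noteq> l0_zero"
  have "\<alpha> + \<beta> \<in> dualH sc H" using h by (intro dual_add R_dual)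
  moreover have "L0root sc tp H (\<alpha> + \<beta>) \<noteq> {l0_zero}" using L0root_pair[of a \<alpha> b \<beta>] h by auto
  ultimately show ?thesis using h(5) unfolding Lambda0_def mem_Collect_eq lam_zero by (intro conjI)
qed

lemma pair_nz: "tp a b c \<noteq> 0 \<Longrightarrow> l0_of tp [(a,b)] \<noteq> l0_zero"
  unfolding l0_zero_def l0_of_def by (auto simp: fun_eq_iff)

lemma pair_z: "l0_of tp [(b,c)] = l0_zero \<Longrightarrow> tp a b c = tp a c b"
  unfolding l0_zero_def l0_of_def by (auto simp: fun_eq_iff)

lemma sp: "(\<forall>t. \<exists>S f. finite S \<and> S \<subseteq> R \<and> (\<forall>\<alpha>\<in>S. f \<alpha> \<in> T \<alpha>) \<and> t = sum f S) \<and>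
     (\<forall>S f. finite S \<and> S \<subseteq> R \<and> (\<forall>\<alpha>\<in>S. f \<alpha> \<in> T \<alpha>) \<and> sum f S = 0 \<longrightarrow> (\<forall>\<alpha>\<in>S. f \<alpha> = 0)) \<and>
     (\<forall>a\<in>T 0. \<forall>b\<in>T 0. \<forall>c\<in>T 0. tp a b c = 0) \<and>
     (\<forall>\<alpha>\<in>L1. \<forall>a\<in>T \<alpha>. \<forall>b\<in>T (\<lambda>h. - \<alpha> h). \<forall>c\<in>T 0. tp a b c = 0)"
  using split unfolding split_lts_def lam_zero .

lemma split_T0: "a \<in> T 0 \<Longrightarrow> b \<in> T 0 \<Longrightarrow> c \<in> T 0 \<Longrightarrow> tp a b c = 0"
  using sp by simp

lemma T_neg_eq: "Troot sc H (\<lambda>h. - \<alpha> h) = Troot sc H (- \<alpha>)" unfolding Troot_def by simp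

lemma split_opp: "\<alpha> \<in> L1 \<Longrightarrow> a \<in> T \<alpha> \<Longrightarrow> b \<in> T (- \<alpha>) \<Longrightarrow> c \<in> T 0 \<Longrightarrow> tp a b c = 0"
  using sp[THEN conjunct2, THEN conjunct2, THEN conjunct2, unfolded T_neg_eq] by blast

lemma decomp: "\<exists>S f. finite S \<and> S \<subseteq> R \<and> (\<forall>\<alpha>\<in>S. f \<alpha> \<in> T \<alpha>) \<and> t = sum f S"
  using sp[THEN conjunct1, THEN spec] .

lemma direct: "finite S \<Longrightarrow> S \<subseteq> R \<Longrightarrow> (\<forall>\<alpha>\<in>S. f \<alpha> \<in> T \<alpha>) \<Longrightarrow> sum f S = 0 \<Longrightarrow> \<alpha> \<in> S \<Longrightarrow> f \<alpha> = 0"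
  using sp[THEN conjunct2, THEN conjunct1, rule_format, of S f] by blast

lemma all_roots: assumes "vs.subspace S" "\<And>\<alpha> x. \<alpha> \<in> R \<Longrightarrow> x \<in> T \<alpha> \<Longrightarrow> x \<in> S" shows "t \<in> S"
proof -
  from decomp[of t] obtain S' f where o: "finite S'" "S' \<subseteq> R" "\<forall>\<alpha>\<in>S'. f \<alpha> \<in> T \<alpha>" "t = sum f S'"
    by (elim exE conjE) (rule that, assumption+)
  have "sum f S' \<in> S"
  proof (rule vs.subspace_sum[OF assms(1)])
    fix x assume "x \<in> S'" then show "f x \<in> S" using o(2,3) assms(2) by blast
  qed
  then show ?thesis using o(4) by simp
qed

inductive reach :: "('v l0 \<Rightarrow> 'k) \<Rightarrow> ('v l0 \<Rightarrow> 'k) \<Rightarrow> bool" where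
  base: "\<alpha> \<in> L1 \<Longrightarrow> reach \<alpha> \<alpha>"
| step: "reach \<alpha> s \<Longrightarrow> a \<in> R \<Longrightarrow> b \<in> R \<Longrightarrow> s + a \<in> L0s \<Longrightarrow> s + a + b \<in> L1 \<Longrightarrow> reach \<alpha> (s + a + b)"

lemma reach_L1: "reach \<alpha> s \<Longrightarrow> \<alpha> \<in> L1 \<and> s \<in> L1"
proof (induction rule: reach.induct)
  case (base \<alpha>) then show ?case by simp
next
  case (step \<alpha> s a b)
  from step.IH have "\<alpha> \<in> L1" by (rule conjunct1)
  then show ?case using step.hyps(5) by (rule conjI)
qed

definition fneg :: "('v l0 \<Rightarrow> 'k) \<Rightarrow> ('v l0 \<Rightarrow> 'k)" where "fneg x = - x"

lemma reach_neg0: "reach \<alpha> s \<Longrightarrow> reach (fneg \<alpha>) (fneg s)"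
proof (induction rule: reach.induct)
  case (base \<alpha>) then show ?case unfolding fneg_def by (intro reach.base L1_neg)
next
  case (step \<alpha> s a b)
  have h1: "- s + - a \<in> L0s" using L0_neg[OF step.hyps(4)] by simp
  have h2: "- s + - a + - b \<in> L1" using L1_neg[OF step.hyps(5)] by simp
  have "reach (fneg \<alpha>) (- s + - a + - b)"
    using reach.step[OF step.IH[unfolded fneg_def] R_neg[OF step.hyps(2)] R_neg[OF step.hyps(3)] h1 h2]
    unfolding fneg_def .
  moreover have "- s + - a + - b = fneg (s + a + b)" unfolding fneg_def by (simp add: algebra_simps)
  ultimately show ?case by (rule back_subst)
qed

lemma reach_neg: "reach \<alpha> s \<Longrightarrow> reach (- \<alpha>) (- s)"
  using reach_neg0 unfolding fneg_def .

lemma reach_trans: "reach s t \<Longrightarrow> reach \<alpha> s \<Longrightarrow> reach \<alpha> t"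
  by (induction rule: reach.induct) (auto intro: reach.step)

lemma reach_sym: "reach \<alpha> s \<Longrightarrow> reach s \<alpha>"
proof (induction rule: reach.induct)
  case (base \<alpha>) then show ?case by (simp add: reach.base)
next
  case (step \<alpha> s a b)
  have "reach (s + a + b) (s + a + b + - b + - a)"
    by (rule reach.step[OF reach.base]) (use step.hyps reach_L1[OF step.hyps(1)] in \<open>auto simp: R_neg L1_neg\<close>)
  then have "reach (s + a + b) s" by (simp add: algebra_simps)
  then show ?case using reach_trans step.IH by blast
qed

lemma move: "\<mu> \<in> L1 \<Longrightarrow> \<nu> \<in> R \<Longrightarrow> \<rho> \<in> R \<Longrightarrow> \<mu> + \<nu> \<in> L0s \<Longrightarrow> \<mu> + \<nu> + \<rho> \<in> L1 \<Longrightarrow> reach \<mu> (\<mu> + \<nu> + \<rho>)"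
  by (rule reach.step[OF reach.base])

definition E where "E \<alpha> \<beta> \<longleftrightarrow> reach \<alpha> \<beta> \<or> reach \<alpha> (- \<beta>)"

lemma E_L1: "E \<alpha> \<beta> \<Longrightarrow> \<alpha> \<in> L1 \<and> \<beta> \<in> L1"
  unfolding E_def using reach_L1 L1_neg[of "- \<beta>"] by auto
lemma E_refl: "\<alpha> \<in> L1 \<Longrightarrow> E \<alpha> \<alpha>" unfolding E_def by (simp add: reach.base)
lemma E_negr: "E \<alpha> \<beta> \<Longrightarrow> E \<alpha> (- \<beta>)" unfolding E_def by auto
lemma E_negr_iff: "E \<alpha> (- \<beta>) \<longleftrightarrow> E \<alpha> \<beta>" unfolding E_def by auto
lemma E_sym: "E \<alpha> \<beta> \<Longrightarrow> E \<beta> \<alpha>"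
  unfolding E_def
proof (elim disjE)
  assume "reach \<alpha> \<beta>" then show "reach \<beta> \<alpha> \<or> reach \<beta> (- \<alpha>)" using reach_sym by blast
next
  assume "reach \<alpha> (- \<beta>)" then have "reach (- \<beta>) \<alpha>" using reach_sym by blast
  then have "reach (- (- \<beta>)) (- \<alpha>)" by (rule reach_neg)
  then show "reach \<beta> \<alpha> \<or> reach \<beta> (- \<alpha>)" by simp
qed
lemma E_negl_iff: "E (- \<alpha>) \<beta> \<longleftrightarrow> E \<alpha> \<beta>" using E_sym E_negr_iff by metis
lemma E_trans: "E \<alpha> \<beta> \<Longrightarrow> E \<beta> \<gamma> \<Longrightarrow> E \<alpha> \<gamma>"
  unfolding E_def
proof (elim disjE)
  assume a: "reach \<alpha> (- \<beta>)" and b: "reach \<beta> (- \<gamma>)"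
  have "reach (- \<beta>) (- (- \<gamma>))" using reach_neg[OF b] .
  then show "reach \<alpha> \<gamma> \<or> reach \<alpha> (- \<gamma>)" using reach_trans a by auto
next
  assume a: "reach \<alpha> (- \<beta>)" and b: "reach \<beta> \<gamma>"
  have "reach (- \<beta>) (- \<gamma>)" using reach_neg[OF b] .
  then show "reach \<alpha> \<gamma> \<or> reach \<alpha> (- \<gamma>)" using reach_trans a by auto
qed (use reach_trans in blast)+
lemma E_move: "\<mu> \<in> L1 \<Longrightarrow> \<nu> \<in> R \<Longrightarrow> \<rho> \<in> R \<Longrightarrow> \<mu> + \<nu> \<in> L0s \<Longrightarrow> \<mu> + \<nu> + \<rho> \<in> L1 \<Longrightarrow> E \<mu> (\<mu> + \<nu> + \<rho>)"
  unfolding E_def using move by blast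


lemma E_move': "\<mu> \<in> L1 \<Longrightarrow> \<nu> \<in> R \<Longrightarrow> \<rho> \<in> R \<Longrightarrow> \<mu> + \<nu> \<in> L0s \<Longrightarrow> r = \<mu> + \<nu> + \<rho> \<Longrightarrow> r \<in> L1 \<Longrightarrow> E \<mu> r"
  using E_move by blast

lemma neg_eq: "(x::'v l0 \<Rightarrow> 'k) + y = 0 \<Longrightarrow> y = - x"
  by (simp add: add_eq_0_iff)

lemma KL:
  assumes a: "a \<in> T \<alpha>1" and b: "b \<in> T \<alpha>2" and c: "c \<in> T \<alpha>3"
    and R1: "\<alpha>1 \<in> R" and R2: "\<alpha>2 \<in> R" and R3: "\<alpha>3 \<in> R" and nz: "tp a b c \<noteq> 0"
  shows "\<exists>r\<in>L1. \<forall>\<mu>\<in>{\<alpha>1,\<alpha>2,\<alpha>3,\<alpha>1+\<alpha>2+\<alpha>3}. \<mu> \<noteq> 0 \<longrightarrow> E \<mu> r"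
proof -
  define s where "s = \<alpha>1 + \<alpha>2"
  define \<delta> where "\<delta> = \<alpha>1 + \<alpha>2 + \<alpha>3"
  have dR: "\<delta> \<in> R" unfolding \<delta>_def using prod_root[OF a b c R1 R2 R3 nz] .
  have A: "s \<noteq> 0 \<Longrightarrow> s \<in> L0s" unfolding s_def using L0s_pair[OF R1 R2 a b _ pair_nz[OF nz]] by blast
  have BC: "l0_of tp [(a,c)] \<noteq> l0_zero \<or> l0_of tp [(b,c)] \<noteq> l0_zero"
  proof (rule ccontr)
    assume "\<not> ?thesis"
    then have "l0_of tp [(a,c)] = l0_zero" "l0_of tp [(b,c)] = l0_zero" by auto
    then have "tp a c b \<noteq> 0" using pair_z[of b c a] nz by simp
    then show False using pair_nz \<open>l0_of tp [(a,c)] = l0_zero\<close> by blast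
  qed
  have B: "l0_of tp [(a,c)] \<noteq> l0_zero \<Longrightarrow> \<alpha>1 + \<alpha>3 \<noteq> 0 \<Longrightarrow> \<alpha>1 + \<alpha>3 \<in> L0s"
    using L0s_pair[OF R1 R3 a c] by blast
  have C: "l0_of tp [(b,c)] \<noteq> l0_zero \<Longrightarrow> \<alpha>2 + \<alpha>3 \<noteq> 0 \<Longrightarrow> \<alpha>2 + \<alpha>3 \<in> L0s"
    using L0s_pair[OF R2 R3 b c] by blast
  have L1of: "\<mu> \<in> R \<Longrightarrow> \<mu> \<noteq> 0 \<Longrightarrow> \<mu> \<in> L1" for \<mu> by simp
  show ?thesis
  proof (cases "s = 0")
    case False
    note sL0 = A[OF False]
    show ?thesis
    proof (cases "\<delta> = 0")
      case False
      have dL1: "\<delta> \<in> L1" using dR False by simp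
      have e1: "\<alpha>1 \<noteq> 0 \<Longrightarrow> E \<alpha>1 \<delta>"
        by (rule E_move'[OF _ R2 R3 sL0[unfolded s_def] \<delta>_def dL1]) (use R1 in simp)
      have e2: "\<alpha>2 \<noteq> 0 \<Longrightarrow> E \<alpha>2 \<delta>"
        by (rule E_move'[OF _ R1 R3 _ _ dL1]) (use R2 sL0 in \<open>simp_all add: s_def \<delta>_def algebra_simps\<close>)
      have e3: "\<alpha>3 \<noteq> 0 \<Longrightarrow> E \<alpha>3 \<delta>"
      proof -
        assume n3: "\<alpha>3 \<noteq> 0"
        from BC show ?thesis
        proof
          assume B0: "l0_of tp [(a,c)] \<noteq> l0_zero"
          show ?thesis
          proof (cases "\<alpha>1 + \<alpha>3 = 0")
            case True
            then have "\<alpha>3 = - \<alpha>1" by (rule neg_eq)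
            then have "\<alpha>1 \<noteq> 0" using n3 by auto
            then have "E \<alpha>1 \<delta>" by (rule e1)
            then show ?thesis using \<open>\<alpha>3 = - \<alpha>1\<close> E_negl_iff by simp
          next
            case False
            show ?thesis
              by (rule E_move'[OF _ R1 R2 _ _ dL1]) (use R3 n3 B[OF B0 False] in \<open>simp_all add: \<delta>_def algebra_simps\<close>)
          qed
        next
          assume C0: "l0_of tp [(b,c)] \<noteq> l0_zero"
          show ?thesis
          proof (cases "\<alpha>2 + \<alpha>3 = 0")
            case True
            then have "\<alpha>3 = - \<alpha>2" by (rule neg_eq)
            then have "\<alpha>2 \<noteq> 0" using n3 by auto
            then have "E \<alpha>2 \<delta>" by (rule e2)
            then show ?thesis using \<open>\<alpha>3 = - \<alpha>2\<close> E_negl_iff by simp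
          next
            case False
            show ?thesis
              by (rule E_move'[OF _ R2 R1 _ _ dL1]) (use R3 n3 C[OF C0 False] in \<open>simp_all add: \<delta>_def algebra_simps\<close>)
          qed
        qed
      qed
      show ?thesis
        using e1 e2 e3 E_refl[OF dL1] dL1 unfolding \<delta>_def by blast
    next
      case True
      have a3: "\<alpha>3 = - s" using True unfolding \<delta>_def s_def by (simp add: add_eq_0_iff algebra_simps)
      have sL1: "s \<in> L1" using R3 False a3 L1_neg[of "- s"] by auto
      have a3L1: "\<alpha>3 \<in> L1" using sL1 a3 L1_neg by simp
      have e1: "\<alpha>1 \<noteq> 0 \<Longrightarrow> E \<alpha>1 \<alpha>3"
      proof -
        assume "\<alpha>1 \<noteq> 0"
        have "E \<alpha>1 s" by (rule E_move'[OF _ R2 _ sL0[unfolded s_def], of 0]) (use R1 \<open>\<alpha>1 \<noteq> 0\<close> sL1 in \<open>simp_all add: s_def\<close>)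
        then show ?thesis using a3 E_negr by simp
      qed
      have e2: "\<alpha>2 \<noteq> 0 \<Longrightarrow> E \<alpha>2 \<alpha>3"
      proof -
        assume "\<alpha>2 \<noteq> 0"
        have "E \<alpha>2 s" by (rule E_move'[OF _ R1, of _ 0]) (use R2 \<open>\<alpha>2 \<noteq> 0\<close> sL1 sL0 in \<open>simp_all add: s_def algebra_simps\<close>)
        then show ?thesis using a3 E_negr by simp
      qed
      show ?thesis
        using e1 e2 E_refl[OF a3L1] a3L1 True unfolding \<delta>_def by blast
    qed
  next
    case True
    have a2: "\<alpha>2 = - \<alpha>1" using True unfolding s_def by (rule neg_eq)
    have d3: "\<alpha>1 + \<alpha>2 + \<alpha>3 = \<alpha>3" using True unfolding s_def by simp
    show ?thesis
    proof (cases "\<alpha>1 = 0")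
      case True
      have "\<alpha>2 = 0" using a2 True by simp
      have n3: "\<alpha>3 \<noteq> 0"
      proof
        assume "\<alpha>3 = 0"
        then show False using split_T0 a b c nz True \<open>\<alpha>2 = 0\<close> by simp
      qed
      have a3L1: "\<alpha>3 \<in> L1" using R3 n3 by simp
      show ?thesis using E_refl[OF a3L1] a3L1 True \<open>\<alpha>2 = 0\<close> d3 by auto
    next
      case False
      have a1L1: "\<alpha>1 \<in> L1" using R1 False by simp
      have n3: "\<alpha>3 \<noteq> 0"
      proof
        assume "\<alpha>3 = 0"
        then show False using split_opp[OF a1L1 a] b c nz a2 by simp
      qed
      have a3L1: "\<alpha>3 \<in> L1" using R3 n3 by simp
      have e1: "E \<alpha>1 \<alpha>3"
        using BC
      proof
        assume B0: "l0_of tp [(a,c)] \<noteq> l0_zero"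
        show ?thesis
        proof (cases "\<alpha>1 + \<alpha>3 = 0")
          case True
          then have "\<alpha>3 = - \<alpha>1" by (rule neg_eq)
          then show ?thesis using E_negr[OF E_refl[OF a1L1]] by simp
        next
          case False
          show ?thesis
            by (rule E_move'[OF a1L1 R3 R2 B[OF B0 False] _ a3L1]) (use a2 in \<open>simp add: algebra_simps\<close>)
        qed
      next
        assume C0: "l0_of tp [(b,c)] \<noteq> l0_zero"
        show ?thesis
        proof (cases "\<alpha>2 + \<alpha>3 = 0")
          case True
          then have "\<alpha>3 = \<alpha>1" using a2 by (simp add: add_eq_0_iff)
          then show ?thesis using E_refl[OF a1L1] by simp
        next
          case False
          have a2L1: "\<alpha>2 \<in> L1" using a2 L1_neg[OF a1L1] by simp
          have "E \<alpha>2 \<alpha>3"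
            by (rule E_move'[OF a2L1 R3 R1 C[OF C0 False] _ a3L1]) (use a2 in \<open>simp add: algebra_simps\<close>)
          then show ?thesis using a2 E_negl_iff by simp
        qed
      qed
      have e2: "E \<alpha>2 \<alpha>3" using e1 a2 E_negl_iff by simp
      show ?thesis using e1 e2 E_refl[OF a3L1] a3L1 d3 by auto
    qed
  qed
qed


lemma psum_Suc: "psum a (Suc m) = psum a m + a (Suc m)"
  unfolding psum_def by (simp add: fun_eq_iff)
lemma psum_1: "psum a 1 = a 1"
  unfolding psum_def by (simp add: fun_eq_iff)
lemma psum_Suc0: "psum a (Suc 0) = a (Suc 0)"
  unfolding psum_def by (simp add: fun_eq_iff)
lemma psum_cong: "(\<And>i. 1 \<le> i \<Longrightarrow> i \<le> m \<Longrightarrow> a i = b i) \<Longrightarrow> psum a m = psum b m"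
  unfolding psum_def by (simp add: fun_eq_iff)

definition pathP where
  "pathP \<alpha> n a \<longleftrightarrow> (\<forall>i\<in>{1..2*n+1}. a i \<in> R) \<and> (\<forall>k\<le>n. psum a (2*k+1) \<in> L1) \<and>
      (\<forall>k\<in>{1..n}. psum a (2*k) \<in> L0s) \<and> a 1 = \<alpha>"

lemma conn_unfold: "connected_roots sc tp H \<alpha> \<beta> \<longleftrightarrow>
   (\<exists>n a. pathP \<alpha> n a \<and> (psum a (2*n+1) = \<beta> \<or> psum a (2*n+1) = - \<beta>))"
  unfolding connected_roots_def pathP_def lam_zero conj_assoc by (subst lam_neg) (rule refl)

lemma reach_path: "reach \<alpha> s \<Longrightarrow> \<exists>n a. pathP \<alpha> n a \<and> psum a (2*n+1) = s"
proof (induction rule: reach.induct)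
  case (base \<alpha>)
  show ?case
    by (rule exI[of _ 0], rule exI[of _ "\<lambda>_. \<alpha>"]) (use base in \<open>simp add: pathP_def psum_1 psum_Suc0\<close>)
next
  case (step \<alpha> s x y)
  from step.IH obtain n a where P: "pathP \<alpha> n a" and ps: "psum a (2*n+1) = s" by blast
  define a' where "a' = a(Suc (Suc (2*n)) := x, Suc (Suc (Suc (2*n))) := y)"
  have eq: "psum a' m = psum a m" if "m \<le> 2*n+1" for m
    by (rule psum_cong) (use that in \<open>auto simp: a'_def\<close>)
  have p2: "psum a' (Suc (Suc (2*n))) = s + x"
    using psum_Suc[of a' "2*n+1"] eq[of "2*n+1"] ps by (simp add: a'_def)
  have p3: "psum a' (Suc (Suc (Suc (2*n)))) = s + x + y"
    using psum_Suc[of a' "Suc (Suc (2*n))"] p2 by (simp add: a'_def)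
  have "pathP \<alpha> (Suc n) a'"
    unfolding pathP_def
  proof (intro conjI ballI allI impI)
    fix i assume i: "i \<in> {1..2 * Suc n + 1}"
    show "a' i \<in> R"
    proof (cases "i \<le> 2*n+1")
      case True then show ?thesis using P i unfolding pathP_def a'_def by auto
    next
      case False
      then have "i = 2*n+2 \<or> i = 2*n+3" using i by auto
      then show ?thesis using step.hyps(2,3) unfolding a'_def by auto
    qed
  next
    fix k assume k: "k \<le> Suc n"
    show "psum a' (2*k+1) \<in> L1"
    proof (cases "k \<le> n")
      case True then show ?thesis using P eq[of "2*k+1"] unfolding pathP_def by auto
    next
      case False then have "k = Suc n" using k by auto
      then show ?thesis using p3 step.hyps(5) by (simp add: algebra_simps)
    qed
  next
    fix k assume k: "k \<in> {1..Suc n}"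
    show "psum a' (2*k) \<in> L0s"
    proof (cases "k \<le> n")
      case True then show ?thesis using P eq[of "2*k"] k unfolding pathP_def by auto
    next
      case False then have "k = Suc n" using k by auto
      then show ?thesis using p2 step.hyps(4) by (simp add: algebra_simps)
    qed
  next
    show "a' 1 = \<alpha>" using P unfolding pathP_def a'_def by simp
  qed
  moreover have "psum a' (2 * Suc n + 1) = s + x + y" using p3 by (simp add: algebra_simps)
  ultimately show ?case by blast
qed

lemma path_reach: assumes P: "pathP \<alpha> n a" shows "reach \<alpha> (psum a (2*n+1))"
proof -
  have "m \<le> n \<Longrightarrow> reach \<alpha> (psum a (2*m+1))" for m
  proof (induction m)
    case 0
    have "psum a 1 \<in> L1" using P unfolding pathP_def by (metis le0 mult_0_right add_0)
    then show ?case using P unfolding pathP_def psum_1 by (simp add: reach.base psum_Suc0)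
  next
    case (Suc m)
    have IH: "reach \<alpha> (psum a (2*m+1))" using Suc by simp
    have R2: "a (Suc (Suc (2*m))) \<in> R" using P Suc.prems unfolding pathP_def by auto
    have R3: "a (Suc (Suc (Suc (2*m)))) \<in> R" using P Suc.prems unfolding pathP_def by auto
    have e2: "psum a (Suc (Suc (2*m))) = psum a (2*m+1) + a (Suc (Suc (2*m)))" using psum_Suc[of a "2*m+1"] by simp
    have e3: "psum a (Suc (Suc (Suc (2*m)))) = psum a (Suc (Suc (2*m))) + a (Suc (Suc (Suc (2*m))))" using psum_Suc[of a "Suc (Suc (2*m))"] by simp
    have k: "Suc m \<in> {1..n}" using Suc.prems by simp
    have L0: "psum a (2*(Suc m)) \<in> L0s" using P k unfolding pathP_def by blast
    have L1: "psum a (2*(Suc m)+1) \<in> L1" using P Suc.prems unfolding pathP_def by blast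
    have L0': "psum a (2*m+1) + a (Suc (Suc (2*m))) \<in> L0s" using L0 e2 by simp
    have L1': "psum a (2*m+1) + a (Suc (Suc (2*m))) + a (Suc (Suc (Suc (2*m)))) \<in> L1" using L1 e2 e3 by (simp add: algebra_simps)
    have "reach \<alpha> (psum a (2*m+1) + a (Suc (Suc (2*m))) + a (Suc (Suc (Suc (2*m)))))"
      by (rule reach.step[OF IH R2 R3 L0' L1'])
    moreover have "psum a (2*m+1) + a (Suc (Suc (2*m))) + a (Suc (Suc (Suc (2*m)))) = psum a (2 * Suc m + 1)"
      using e2 e3 by (simp add: algebra_simps)
    ultimately show ?case by (rule back_subst)
  qed
  then show ?thesis by simp
qed

lemma conn_E: "connected_roots sc tp H \<alpha> \<beta> \<longleftrightarrow> E \<alpha> \<beta>"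
proof
  assume "connected_roots sc tp H \<alpha> \<beta>"
  then obtain n a where P: "pathP \<alpha> n a" and q: "psum a (2*n+1) = \<beta> \<or> psum a (2*n+1) = - \<beta>"
    unfolding conn_unfold by blast
  show "E \<alpha> \<beta>" using path_reach[OF P] q unfolding E_def by auto
next
  assume "E \<alpha> \<beta>"
  then show "connected_roots sc tp H \<alpha> \<beta>"
    unfolding E_def conn_unfold
  proof
    assume "reach \<alpha> \<beta>"
    then obtain n a where "pathP \<alpha> n a" "psum a (2*n+1) = \<beta>" using reach_path by blast
    then show "\<exists>n a. pathP \<alpha> n a \<and> (psum a (2 * n + 1) = \<beta> \<or> psum a (2 * n + 1) = - \<beta>)" by blast
  next
    assume "reach \<alpha> (- \<beta>)"
    then obtain n a where "pathP \<alpha> n a" "psum a (2*n+1) = - \<beta>" using reach_path by blast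
    then show "\<exists>n a. pathP \<alpha> n a \<and> (psum a (2 * n + 1) = \<beta> \<or> psum a (2 * n + 1) = - \<beta>)" by blast
  qed
qed

definition K where "K \<alpha>0 = {\<beta> \<in> L1. E \<alpha>0 \<beta>}"

lemma conn_class_K: "conn_class sc tp H \<alpha>0 = K \<alpha>0"
  unfolding conn_class_def K_def conn_E ..

lemma K_neg: "\<beta> \<in> K \<alpha>0 \<Longrightarrow> - \<beta> \<in> K \<alpha>0"
  unfolding K_def using L1_neg E_negr by auto

lemma K_L1: "K \<alpha>0 \<subseteq> L1" unfolding K_def by auto

lemma K_self: "\<alpha>0 \<in> L1 \<Longrightarrow> \<alpha>0 \<in> K \<alpha>0" unfolding K_def using E_refl by auto

lemma KLK:
  assumes a: "a \<in> T \<alpha>1" and b: "b \<in> T \<alpha>2" and c: "c \<in> T \<alpha>3"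
    and R1: "\<alpha>1 \<in> R" and R2: "\<alpha>2 \<in> R" and R3: "\<alpha>3 \<in> R" and nz: "tp a b c \<noteq> 0"
    and hit: "\<alpha>1 \<in> K \<alpha>0 \<or> \<alpha>2 \<in> K \<alpha>0 \<or> \<alpha>3 \<in> K \<alpha>0 \<or> \<alpha>1 + \<alpha>2 + \<alpha>3 \<in> K \<alpha>0"
  shows "\<alpha>1 \<in> insert 0 (K \<alpha>0) \<and> \<alpha>2 \<in> insert 0 (K \<alpha>0) \<and> \<alpha>3 \<in> insert 0 (K \<alpha>0) \<and> \<alpha>1 + \<alpha>2 + \<alpha>3 \<in> insert 0 (K \<alpha>0)"
proof -
  obtain r where r: "r \<in> L1" "\<forall>\<mu>\<in>{\<alpha>1,\<alpha>2,\<alpha>3,\<alpha>1+\<alpha>2+\<alpha>3}. \<mu> \<noteq> 0 \<longrightarrow> E \<mu> r"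
    using KL[OF a b c R1 R2 R3 nz] by blast
  obtain \<mu>0 where m0: "\<mu>0 \<in> {\<alpha>1,\<alpha>2,\<alpha>3,\<alpha>1+\<alpha>2+\<alpha>3}" "\<mu>0 \<in> K \<alpha>0" using hit by blast
  have "\<mu>0 \<noteq> 0" using m0(2) K_L1 L1_nz by blast
  then have "E \<mu>0 r" using r m0 by blast
  then have Ea: "E \<alpha>0 r" using m0(2) unfolding K_def using E_trans by blast
  have "\<mu> \<in> insert 0 (K \<alpha>0)" if "\<mu> \<in> {\<alpha>1,\<alpha>2,\<alpha>3,\<alpha>1+\<alpha>2+\<alpha>3}" for \<mu>
  proof (cases "\<mu> = 0")
    case False
    then have "E \<mu> r" using r that by blast
    then have "E \<alpha>0 \<mu>" using Ea E_sym E_trans by blast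
    then show ?thesis unfolding K_def using E_L1 by blast
  qed simp
  then show ?thesis by blast
qed


lemma lam3: "((\<lambda>h. \<alpha> h + \<beta> h + \<gamma> h) = (\<lambda>_. 0)) = (\<alpha> + \<beta> + \<gamma> = (0::'v l0 \<Rightarrow> 'k))"
  by (simp add: fun_eq_iff)

lemma lam3': "((\<lambda>h. \<alpha> h + \<beta> h + \<gamma> h) = 0) = (\<alpha> + \<beta> + \<gamma> = (0::'v l0 \<Rightarrow> 'k))"
  by (simp add: fun_eq_iff)

lemma idX: "tp (tp a b c) y z = tp a b (tp c y z) + tp (tp a b y) c z + tp (tp a b z) c y - tp (tp a b z) y c"
  unfolding id2[of a b c y z] by (simp add: algebra_simps)

lemma idY: "tp y (tp a b c) z = tp (tp y a b) c z - tp (tp y b a) c z - tp y c (tp a b z) - tp (tp y c z) a b + tp (tp y c z) b a"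
  unfolding id1[of y a b c z] id2[of y c a b z] by (simp add: algebra_simps)

lemma idZ: "tp y z (tp a b c) = tp y (tp z a b) c - tp y (tp z b a) c + tp (tp y a b) z c - tp (tp y b a) z c - tp (tp y z c) a b + tp (tp y z c) b a"
  unfolding id2[of y z a b c] id1[of y z a b c] id1[of y z b a c] by (simp add: algebra_simps)

context
  fixes \<alpha>0 assumes a0: "\<alpha>0 \<in> L1"
begin

abbreviation Kc where "Kc \<equiv> K \<alpha>0"
abbreviation K0 where "K0 \<equiv> insert 0 Kc"

lemma K0_R: "\<mu> \<in> K0 \<Longrightarrow> \<mu> \<in> R" using K_L1 by auto

definition G0 where
  "G0 = {tp x y z | x y z \<alpha> \<beta> \<gamma>. \<alpha> \<in> K0 \<and> \<beta> \<in> K0 \<and> \<gamma> \<in> K0 \<and> \<alpha> + \<beta> + \<gamma> = 0 \<and>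
        x \<in> T \<alpha> \<and> y \<in> T \<beta> \<and> z \<in> T \<gamma>}"

lemma T0P_eq: "T0_part sc tp H Kc = vs.span G0"
  unfolding T0_part_def G0_def lam_zero lam3' ..

abbreviation V where "V \<equiv> vs.span (\<Union>\<gamma>\<in>Kc. T \<gamma>)"

lemma V_eq: "V_part sc H Kc = V" unfolding V_part_def ..

definition I where "I = {x + y | x y. x \<in> vs.span G0 \<and> y \<in> V}"

lemma I_eq: "T_Lambda sc tp H Kc = I" unfolding T_Lambda_def I_def T0P_eq V_eq ..

lemma G0_T0: "G0 \<subseteq> T 0"
proof
  fix u assume "u \<in> G0"
  then obtain x y z \<alpha> \<beta> \<gamma> where u: "u = tp x y z" "\<alpha> + \<beta> + \<gamma> = 0" "x \<in> T \<alpha>" "y \<in> T \<beta>" "z \<in> T \<gamma>"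
    unfolding G0_def by blast
  show "u \<in> T 0" using T_prod[OF u(3,4,5)] u(1,2) by simp
qed

lemma T0P_T0: "vs.span G0 \<subseteq> T 0"
  by (rule vs.span_minimal[OF G0_T0 T_sub])

lemma I_sub: "vs.subspace I"
  unfolding vs.subspace_def I_def
proof (intro conjI ballI allI)
  show "0 \<in> {x + y |x y. x \<in> vs.span G0 \<and> y \<in> V}"
    using vs.span_zero by force
next
  fix u v assume "u \<in> {x + y |x y. x \<in> vs.span G0 \<and> y \<in> V}" "v \<in> {x + y |x y. x \<in> vs.span G0 \<and> y \<in> V}"
  then obtain x1 y1 x2 y2 where "u = x1 + y1" "v = x2 + y2" "x1 \<in> vs.span G0" "y1 \<in> V" "x2 \<in> vs.span G0" "y2 \<in> V"
    by blast
  then show "u + v \<in> {x + y |x y. x \<in> vs.span G0 \<and> y \<in> V}"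
    by (intro CollectI exI[of _ "x1 + x2"] exI[of _ "y1 + y2"]) (auto simp: vs.span_add algebra_simps)
next
  fix c u assume "u \<in> {x + y |x y. x \<in> vs.span G0 \<and> y \<in> V}"
  then obtain x1 y1 where "u = x1 + y1" "x1 \<in> vs.span G0" "y1 \<in> V" by blast
  then show "sc c u \<in> {x + y |x y. x \<in> vs.span G0 \<and> y \<in> V}"
    by (intro CollectI exI[of _ "sc c x1"] exI[of _ "sc c y1"]) (auto simp: vs.span_scale vs.scale_right_distrib)
qed

lemma T0P_I: "x \<in> vs.span G0 \<Longrightarrow> x \<in> I"
  unfolding I_def using vs.span_zero by force
lemma V_I: "y \<in> V \<Longrightarrow> y \<in> I"
  unfolding I_def using vs.span_zero by force
lemma G0_I: "x \<in> G0 \<Longrightarrow> x \<in> I" using T0P_I vs.span_base by blast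
lemma TK_I: "\<kappa> \<in> Kc \<Longrightarrow> x \<in> T \<kappa> \<Longrightarrow> x \<in> I" using V_I vs.span_base by blast

lemma PROD_K0:
  assumes a: "a \<in> T \<alpha>1" and b: "b \<in> T \<alpha>2" and c: "c \<in> T \<alpha>3"
    and K1: "\<alpha>1 \<in> K0" and K2: "\<alpha>2 \<in> K0" and K3: "\<alpha>3 \<in> K0"
  shows "tp a b c \<in> I"
proof (cases "tp a b c = 0")
  case True then show ?thesis using vs.subspace_0[OF I_sub] by simp
next
  case nz: False
  show ?thesis
  proof (cases "\<alpha>1 + \<alpha>2 + \<alpha>3 = 0")
    case True
    then have "tp a b c \<in> G0" unfolding G0_def using a b c K1 K2 K3 by blast
    then show ?thesis by (rule G0_I)
  next
    case False
    then have "\<alpha>1 \<in> Kc \<or> \<alpha>2 \<in> Kc \<or> \<alpha>3 \<in> Kc" using K1 K2 K3 by auto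
    then have "\<alpha>1 + \<alpha>2 + \<alpha>3 \<in> K0" using KLK[OF a b c K0_R[OF K1] K0_R[OF K2] K0_R[OF K3] nz] by blast
    then have "\<alpha>1 + \<alpha>2 + \<alpha>3 \<in> Kc" using False by simp
    then show ?thesis using TK_I T_prod[OF a b c] by blast
  qed
qed

lemma kill:
  assumes a: "a \<in> T \<alpha>1" and b: "b \<in> T \<alpha>2" and c: "c \<in> T \<alpha>3"
    and R1: "\<alpha>1 \<in> R" and R2: "\<alpha>2 \<in> R" and R3: "\<alpha>3 \<in> R"
    and hit: "\<alpha>1 \<in> Kc \<or> \<alpha>2 \<in> Kc \<or> \<alpha>3 \<in> Kc"
    and out: "\<alpha>1 \<notin> K0 \<or> \<alpha>2 \<notin> K0 \<or> \<alpha>3 \<notin> K0"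
  shows "tp a b c = 0"
  using KLK[OF a b c R1 R2 R3 _, of \<alpha>0] hit out by blast


lemma Gprime:
  assumes a: "a \<in> T \<alpha>1" and b: "b \<in> T \<alpha>2" and c: "c \<in> T \<alpha>3"
    and K1: "\<alpha>1 \<in> K0" and K2: "\<alpha>2 \<in> K0" and K3: "\<alpha>3 \<in> K0" and sum: "\<alpha>1 + \<alpha>2 + \<alpha>3 = 0"
    and y: "y \<in> T \<beta>" and z: "z \<in> T \<gamma>" and Rb: "\<beta> \<in> R" and Rg: "\<gamma> \<in> R"
    and nb: "\<beta> \<notin> Kc" and ng: "\<gamma> \<notin> Kc" and nz: "\<beta> \<noteq> 0 \<or> \<gamma> \<noteq> 0"
  shows "tp (tp a b c) y z = 0 \<and> tp y (tp a b c) z = 0 \<and> tp y z (tp a b c) = 0"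
proof (cases "tp a b c = 0")
  case True then show ?thesis by simp
next
  case xnz: False
  have R1: "\<alpha>1 \<in> R" and R2: "\<alpha>2 \<in> R" and R3: "\<alpha>3 \<in> R" using K1 K2 K3 K0_R by auto
  have n3: "\<alpha>3 \<in> Kc"
  proof (rule ccontr)
    assume "\<alpha>3 \<notin> Kc"
    then have z3: "\<alpha>3 = 0" using K3 by simp
    then have a2: "\<alpha>2 = - \<alpha>1" using sum by (simp add: add_eq_0_iff)
    show False
    proof (cases "\<alpha>1 = 0")
      case True
      then show False using split_T0[OF _ _ c[unfolded z3]] a b a2 xnz by simp
    next
      case False
      then have "\<alpha>1 \<in> L1" using K1 K_L1 by auto
      then show False using split_opp[OF _ a _ c[unfolded z3]] b a2 xnz by simp
    qed
  qed
  have n12: "\<alpha>1 \<in> Kc \<or> \<alpha>2 \<in> Kc"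
  proof (rule ccontr)
    assume "\<not> ?thesis"
    then have "\<alpha>1 = 0" "\<alpha>2 = 0" using K1 K2 by auto
    then have "\<alpha>3 = 0" using sum by simp
    then show False using n3 K_L1 L1_nz by blast
  qed
  have m3: "- \<alpha>3 \<in> Kc" using K_neg[OF n3] .
  have mR: "- \<alpha>3 \<in> R" using m3 K_L1 by auto
  have e12: "\<alpha>1 + \<alpha>2 = - \<alpha>3" unfolding eq_neg_iff_add_eq_0 by (rule sum)
  have bK: "\<beta> \<noteq> 0 \<Longrightarrow> \<beta> \<notin> K0" using nb by simp
  have gK: "\<gamma> \<noteq> 0 \<Longrightarrow> \<gamma> \<notin> K0" using ng by simp
  have in1a: "tp w a b = 0" if "w \<in> T \<theta>" "\<theta> \<in> R" "\<theta> \<notin> Kc" "\<theta> \<noteq> 0" for w \<theta>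
    by (rule kill[OF that(1) a b that(2) R1 R2]) (use n12 that in auto)
  have in1b: "tp w b a = 0" if "w \<in> T \<theta>" "\<theta> \<in> R" "\<theta> \<notin> Kc" "\<theta> \<noteq> 0" for w \<theta>
    by (rule kill[OF that(1) b a that(2) R2 R1]) (use n12 that in auto)
  have in1c: "tp a b w = 0" if "w \<in> T \<theta>" "\<theta> \<in> R" "\<theta> \<notin> Kc" "\<theta> \<noteq> 0" for w \<theta>
    by (rule kill[OF a b that(1) R1 R2 that(2)]) (use n12 that in auto)
  note in1 = in1a in1b in1c
  have in0: "w \<in> T 0 \<Longrightarrow> tp w a b \<in> T (- \<alpha>3)" "w \<in> T 0 \<Longrightarrow> tp w b a \<in> T (- \<alpha>3)"
            "w \<in> T 0 \<Longrightarrow> tp a b w \<in> T (- \<alpha>3)" for w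
    using T_prod[OF _ a b, of w 0] T_prod[OF _ b a, of w 0] T_prod[OF a b, of w 0] e12
    by (simp_all add: add.commute)
  have out: "u \<in> T (- \<alpha>3) \<Longrightarrow> w \<in> T \<theta> \<Longrightarrow> \<theta> \<in> R \<Longrightarrow> \<theta> \<notin> Kc \<Longrightarrow> \<theta> \<noteq> 0 \<Longrightarrow>
     tp u c w = 0 \<and> tp u w c = 0 \<and> tp w c u = 0 \<and> tp w u c = 0" for u w \<theta>
    using kill[OF _ c, of u "- \<alpha>3" w \<theta>] kill[OF _ _ c, of u "- \<alpha>3" w \<theta>]
          kill[OF _ c, of w \<theta> u "- \<alpha>3"] kill[OF _ _ c, of w \<theta> u "- \<alpha>3"] m3 mR R3 n3
    by auto
  have cyz: "tp c y z = 0" "tp y c z = 0" "tp y z c = 0"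
    using kill[OF c y z R3 Rb Rg] kill[OF y c z Rb R3 Rg] kill[OF y z c Rb Rg R3] n3 nz bK gK by blast+
  have yab: "tp (tp y a b) c z = 0 \<and> tp (tp y b a) c z = 0 \<and> tp (tp y a b) z c = 0 \<and> tp (tp y b a) z c = 0"
  proof (cases "\<beta> = 0")
    case True
    then have g: "\<gamma> \<noteq> 0" using nz by simp
    have "tp y a b \<in> T (- \<alpha>3)" "tp y b a \<in> T (- \<alpha>3)" using in0 y True by auto
    then show ?thesis using out[OF _ z Rg ng g] by auto
  next
    case False then show ?thesis using in1(1,2)[OF y Rb nb] by simp
  qed
  have zab: "tp (tp a b z) c y = 0 \<and> tp (tp a b z) y c = 0 \<and> tp y c (tp a b z) = 0 \<and>
             tp y (tp z a b) c = 0 \<and> tp y (tp z b a) c = 0"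
  proof (cases "\<gamma> = 0")
    case True
    then have g: "\<beta> \<noteq> 0" using nz by simp
    have "tp a b z \<in> T (- \<alpha>3)" "tp z a b \<in> T (- \<alpha>3)" "tp z b a \<in> T (- \<alpha>3)" using in0 z True by auto
    then show ?thesis using out[OF _ y Rb nb g] by auto
  next
    case False then show ?thesis using in1(1,2,3)[OF z Rg ng] by simp
  qed
  have aby: "tp (tp a b y) c z = 0"
  proof (cases "\<beta> = 0")
    case True
    then have g: "\<gamma> \<noteq> 0" using nz by simp
    have "tp a b y \<in> T (- \<alpha>3)" using in0 y True by auto
    then show ?thesis using out[OF _ z Rg ng g] by auto
  next
    case False then show ?thesis using in1(3)[OF y Rb nb] by simp
  qed
  show ?thesis
    unfolding idX[of a b c y z] idY[of y a b c z] idZ[of y z a b c]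
    using cyz yab zab aby by simp
qed


lemma PROD_IN:
  assumes a: "a \<in> T \<alpha>1" and b: "b \<in> T \<alpha>2" and c: "c \<in> T \<alpha>3"
    and R1: "\<alpha>1 \<in> R" and R2: "\<alpha>2 \<in> R" and R3: "\<alpha>3 \<in> R"
    and hit: "\<alpha>1 \<in> Kc \<or> \<alpha>2 \<in> Kc \<or> \<alpha>3 \<in> Kc"
  shows "tp a b c \<in> I"
proof (cases "tp a b c = 0")
  case True then show ?thesis using vs.subspace_0[OF I_sub] by simp
next
  case False
  then have "\<alpha>1 \<in> K0 \<and> \<alpha>2 \<in> K0 \<and> \<alpha>3 \<in> K0" using KLK[OF a b c R1 R2 R3 False, of \<alpha>0] hit by blast
  then show ?thesis using PROD_K0[OF a b c] by blast
qed

definition Q where "Q x y z \<longleftrightarrow> tp x y z \<in> I \<and> tp y x z \<in> I \<and> tp y z x \<in> I"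

lemma Q_sub1: "vs.subspace {x. Q x y z}"
  unfolding vs.subspace_def Q_def
  using vs.subspace_0[OF I_sub] vs.subspace_add[OF I_sub] vs.subspace_scale[OF I_sub]
  by (simp add: tp_add1 tp_add2 tp_add3 tp_scale1 tp_scale2 tp_scale3)
lemma Q_sub2: "vs.subspace {y. Q x y z}"
  unfolding vs.subspace_def Q_def
  using vs.subspace_0[OF I_sub] vs.subspace_add[OF I_sub] vs.subspace_scale[OF I_sub]
  by (simp add: tp_add1 tp_add2 tp_add3 tp_scale1 tp_scale2 tp_scale3)
lemma Q_sub3: "vs.subspace {z. Q x y z}"
  unfolding vs.subspace_def Q_def
  using vs.subspace_0[OF I_sub] vs.subspace_add[OF I_sub] vs.subspace_scale[OF I_sub]
  by (simp add: tp_add1 tp_add2 tp_add3 tp_scale1 tp_scale2 tp_scale3)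

abbreviation Gen where "Gen \<equiv> G0 \<union> (\<Union>\<kappa>\<in>Kc. T \<kappa>)"

lemma CORE_T:
  assumes x: "x \<in> T \<kappa>" and k: "\<kappa> \<in> Kc" and y: "y \<in> T \<beta>" and z: "z \<in> T \<gamma>" and Rb: "\<beta> \<in> R" and Rg: "\<gamma> \<in> R"
  shows "Q x y z"
proof -
  have Rk: "\<kappa> \<in> R" using k K_L1 by auto
  show ?thesis unfolding Q_def
    using PROD_IN[OF x y z Rk Rb Rg] PROD_IN[OF y x z Rb Rk Rg] PROD_IN[OF y z x Rb Rg Rk] k by blast
qed

lemma CORE_G0:
  assumes x: "x \<in> G0" and y: "y \<in> T \<beta>" and z: "z \<in> T \<gamma>" and Rb: "\<beta> \<in> R" and Rg: "\<gamma> \<in> R"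
  shows "Q x y z"
proof -
  obtain a b c \<alpha>1 \<alpha>2 \<alpha>3 where g: "x = tp a b c" "\<alpha>1 \<in> K0" "\<alpha>2 \<in> K0" "\<alpha>3 \<in> K0" "\<alpha>1 + \<alpha>2 + \<alpha>3 = 0"
    "a \<in> T \<alpha>1" "b \<in> T \<alpha>2" "c \<in> T \<alpha>3" using x unfolding G0_def by blast
  have x0: "x \<in> T 0" using x G0_T0 by blast
  have R0: "(0::'v l0 \<Rightarrow> 'k) \<in> R" by simp
  show ?thesis
  proof (cases "\<beta> \<in> K0 \<and> \<gamma> \<in> K0")
    case True
    then show ?thesis unfolding Q_def
      using PROD_K0[OF x0 y z] PROD_K0[OF y x0 z] PROD_K0[OF y z x0] by simp
  next
    case False
    show ?thesis
    proof (cases "\<beta> \<in> Kc \<or> \<gamma> \<in> Kc")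
      case True
      have o: "\<beta> \<notin> K0 \<or> \<gamma> \<notin> K0" using False by blast
      have "tp x y z = 0" by (rule kill[OF x0 y z R0 Rb Rg]) (use True o in auto)
      moreover have "tp y x z = 0" by (rule kill[OF y x0 z Rb R0 Rg]) (use True o in auto)
      moreover have "tp y z x = 0" by (rule kill[OF y z x0 Rb Rg R0]) (use True o in auto)
      ultimately show ?thesis unfolding Q_def using vs.subspace_0[OF I_sub] by simp
    next
      case nK: False
      have nz: "\<beta> \<noteq> 0 \<or> \<gamma> \<noteq> 0" using False by auto
      have "tp x y z = 0 \<and> tp y x z = 0 \<and> tp y z x = 0"
        using Gprime[OF g(6,7,8,2,3,4,5) y z Rb Rg _ _ nz] nK g(1) by blast
      then show ?thesis unfolding Q_def using vs.subspace_0[OF I_sub] by simp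
    qed
  qed
qed

lemma CORE:
  assumes x: "x \<in> Gen" and y: "y \<in> T \<beta>" and z: "z \<in> T \<gamma>" and Rb: "\<beta> \<in> R" and Rg: "\<gamma> \<in> R"
  shows "Q x y z"
  using x CORE_G0[OF _ y z Rb Rg] CORE_T[OF _ _ y z Rb Rg] by blast

lemma CORE2: assumes x: "x \<in> Gen" shows "Q x y z"
proof -
  have step1: "Q x y z" if z: "z \<in> T \<gamma>" "\<gamma> \<in> R" for y z \<gamma>
  proof -
    have "y \<in> {y. Q x y z}"
      by (rule all_roots[OF Q_sub2]) (use CORE[OF x _ z(1) _ z(2)] in blast)
    then show ?thesis by simp
  qed
  have "z \<in> {z. Q x y z}"
    by (rule all_roots[OF Q_sub3]) (use step1 in blast)
  then show ?thesis by simp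
qed

lemma I_span: "I \<subseteq> vs.span Gen"
proof
  fix u assume "u \<in> I"
  then obtain x v where u: "u = x + v" "x \<in> vs.span G0" "v \<in> V" unfolding I_def by blast
  have "x \<in> vs.span Gen" using u(2) vs.span_mono[of G0 Gen] by blast
  moreover have "v \<in> vs.span Gen" using u(3) vs.span_mono[of "\<Union>\<kappa>\<in>Kc. T \<kappa>" Gen] by blast
  ultimately show "u \<in> vs.span Gen" using u(1) vs.span_add by blast
qed

lemma I_ideal: "lts_ideal sc tp I"
  unfolding lts_ideal_def
proof (rule conjI[OF I_sub], intro ballI allI)
  fix x y z assume "x \<in> I"
  then have "x \<in> vs.span Gen" using I_span by blast
  moreover have "vs.span Gen \<subseteq> {x. Q x y z}"
    by (rule vs.span_minimal[OF _ Q_sub1]) (use CORE2 in blast)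
  ultimately have "Q x y z" by blast
  then show "tp x y z \<in> I \<and> tp y x z \<in> I \<and> tp y z x \<in> I" unfolding Q_def .
qed

lemma part1: "T0_part sc tp H (conn_class sc tp H \<alpha>0) \<subseteq> Troot sc H (\<lambda>_. 0) \<and>
            lts_ideal sc tp (T_Lambda sc tp H (conn_class sc tp H \<alpha>0))"
  unfolding conn_class_K T0P_eq I_eq lam_zero using T0P_T0 I_ideal by blast

lemma V_repr: assumes vV: "v \<in> V" shows "\<exists>S g. finite S \<and> S \<subseteq> Kc \<and> (\<forall>\<kappa>\<in>S. g \<kappa> \<in> T \<kappa>) \<and> v = sum g S"
proof -
  define W where "W = {sum g S | S g. finite S \<and> S \<subseteq> Kc \<and> (\<forall>\<kappa>\<in>S. g \<kappa> \<in> T \<kappa>)}"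
  have Wsub: "vs.subspace W"
    unfolding vs.subspace_def
  proof (intro conjI ballI allI)
    show "0 \<in> W" unfolding W_def by (intro CollectI exI[of _ "{}"]) auto
  next
    fix u v assume "u \<in> W" "v \<in> W"
    then obtain S1 g1 S2 g2 where o: "u = sum g1 S1" "finite S1" "S1 \<subseteq> Kc" "\<forall>\<kappa>\<in>S1. g1 \<kappa> \<in> T \<kappa>"
      "v = sum g2 S2" "finite S2" "S2 \<subseteq> Kc" "\<forall>\<kappa>\<in>S2. g2 \<kappa> \<in> T \<kappa>" unfolding W_def by blast
    define g where "g \<kappa> = (if \<kappa> \<in> S1 then g1 \<kappa> else 0) + (if \<kappa> \<in> S2 then g2 \<kappa> else 0)" for \<kappa>
    have "sum g (S1 \<union> S2) = sum (\<lambda>\<kappa>. if \<kappa> \<in> S1 then g1 \<kappa> else 0) (S1 \<union> S2) + sum (\<lambda>\<kappa>. if \<kappa> \<in> S2 then g2 \<kappa> else 0) (S1 \<union> S2)"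
      unfolding g_def by (rule sum.distrib)
    also have "\<dots> = sum g1 S1 + sum g2 S2"
      using o(2,6) by (simp add: sum.If_cases Int_absorb2 Un_Int_eq)
    finally have "u + v = sum g (S1 \<union> S2)" using o(1,5) by simp
    moreover have "\<forall>\<kappa>\<in>S1 \<union> S2. g \<kappa> \<in> T \<kappa>"
      unfolding g_def using o(4,8) vs.subspace_add[OF T_sub] by auto
    ultimately show "u + v \<in> W" unfolding W_def using o(2,3,6,7) by blast
  next
    fix r u assume "u \<in> W"
    then obtain S1 g1 where o: "u = sum g1 S1" "finite S1" "S1 \<subseteq> Kc" "\<forall>\<kappa>\<in>S1. g1 \<kappa> \<in> T \<kappa>"
      unfolding W_def by blast
    have "sc r u = sum (\<lambda>\<kappa>. sc r (g1 \<kappa>)) S1" using o(1) vs.scale_sum_right by simp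
    moreover have "\<forall>\<kappa>\<in>S1. sc r (g1 \<kappa>) \<in> T \<kappa>" using o(4) vs.subspace_scale[OF T_sub] by blast
    ultimately show "sc r u \<in> W" unfolding W_def using o(2,3) by blast
  qed
  have UW: "(\<Union>\<kappa>\<in>Kc. T \<kappa>) \<subseteq> W"
  proof
    fix w assume "w \<in> (\<Union>\<kappa>\<in>Kc. T \<kappa>)"
    then obtain \<kappa> where "\<kappa> \<in> Kc" "w \<in> T \<kappa>" by blast
    then show "w \<in> W" unfolding W_def
      by (intro CollectI exI[of _ "{\<kappa>}"] exI[of _ "\<lambda>_. w"]) auto
  qed
  have "V \<subseteq> W" by (rule vs.span_minimal[OF UW Wsub])
  then have "v \<in> W" using vV by (rule subsetD)
  then obtain S g where "v = sum g S" "finite S" "S \<subseteq> Kc" "\<forall>\<kappa>\<in>S. g \<kappa> \<in> T \<kappa>"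
    unfolding W_def by (auto simp only: mem_Collect_eq)
  then show ?thesis by blast
qed

lemma DIR: assumes t: "t \<in> T \<beta>" and b: "\<beta> \<in> L1" and tnz: "t \<noteq> 0" and tI: "t \<in> I"
  shows "\<beta> \<in> Kc"
proof (rule ccontr)
  assume nb: "\<beta> \<notin> Kc"
  obtain x0 v where tv: "t = x0 + v" "x0 \<in> vs.span G0" "v \<in> V" using tI unfolding I_def by blast
  obtain S g where S: "finite S" "S \<subseteq> Kc" "\<forall>\<kappa>\<in>S. g \<kappa> \<in> T \<kappa>" "v = sum g S" using V_repr[OF tv(3)] by blast
  have x0T: "x0 \<in> T 0" using tv(2) T0P_T0 by blast
  have b0: "\<beta> \<noteq> 0" using b L1_nz by blast
  have zS: "(0::'v l0 \<Rightarrow> 'k) \<notin> S" using S(2) K_L1 L1_nz by blast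
  have bS: "\<beta> \<notin> S" using S(2) nb by blast
  define f where "f = g(0 := x0, \<beta> := - t)"
  have "sum f (insert 0 (insert \<beta> S)) = f 0 + (f \<beta> + sum f S)"
    using S(1) zS bS b0 by (simp add: sum.insert)
  also have "sum f S = sum g S" unfolding f_def using zS bS by (intro sum.cong) auto
  also have "f 0 + (f \<beta> + sum g S) = x0 + (- t + v)" unfolding f_def using b0 S(4) by simp
  also have "\<dots> = 0" using tv(1) by (simp add: algebra_simps)
  finally have sum0: "sum f (insert 0 (insert \<beta> S)) = 0" .
  have sub: "insert 0 (insert \<beta> S) \<subseteq> R" using S(2) K_L1 b by auto
  have mem: "\<forall>\<kappa>\<in>insert 0 (insert \<beta> S). f \<kappa> \<in> T \<kappa>"
    unfolding f_def using x0T t S(3) b0 zS bS vs.subspace_neg[OF T_sub] by auto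
  have "f \<beta> = 0" by (rule direct[OF _ sub mem sum0]) (use S(1) in auto)
  then have "t = 0" unfolding f_def using b0 by simp
  then show False using tnz by simp
qed

lemma T_ne: "\<beta> \<in> L1 \<Longrightarrow> \<exists>t. t \<in> T \<beta> \<and> t \<noteq> 0"
  unfolding Lambda1_def using T_zero by blast

end

end

theorem theorem3p1:
  fixes sc :: "'k::field \<Rightarrow> 'v::ab_group_add \<Rightarrow> 'v"
    and tp :: "'v \<Rightarrow> 'v \<Rightarrow> 'v \<Rightarrow> 'v"
    and H :: "'v l0 set"
  assumes lts: "leibniz_triple_system sc tp"
    and mas: "maximal_abelian_subalgebra sc tp H"
    and split: "split_lts sc tp H"
    and sym1: "symmetric_roots (Lambda1 sc H)"
    and sym0: "symmetric_roots (Lambda0 sc tp H)"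
  shows "(\<forall>\<alpha>0\<in>Lambda1 sc H.
            T0_part sc tp H (conn_class sc tp H \<alpha>0) \<subseteq> Troot sc H (\<lambda>_. 0) \<and>
            lts_ideal sc tp (T_Lambda sc tp H (conn_class sc tp H \<alpha>0)))
       \<and> (lts_simple sc tp \<longrightarrow>
            (\<forall>\<alpha>\<in>Lambda1 sc H. \<forall>\<beta>\<in>Lambda1 sc H. connected_roots sc tp H \<alpha> \<beta>))"
proof -
  have HL0: "H \<subseteq> L0 tp" using mas
    unfolding maximal_abelian_subalgebra_def abelian_subalgebra_def l0_subspace_def by blast
  have "LTSF sc tp H"
    unfolding LTSF_def LTSH_def LTSH_axioms_def LTSF_axioms_def LTSc_def
    using lts HL0 split sym1 sym0 by blast
  then interpret F: LTSF sc tp H .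
  have P1: "\<forall>\<alpha>0\<in>Lambda1 sc H.
            T0_part sc tp H (conn_class sc tp H \<alpha>0) \<subseteq> Troot sc H (\<lambda>_. 0) \<and>
            lts_ideal sc tp (T_Lambda sc tp H (conn_class sc tp H \<alpha>0))"
    using F.part1 by blast
  have P2: "\<forall>\<alpha>\<in>Lambda1 sc H. \<forall>\<beta>\<in>Lambda1 sc H. connected_roots sc tp H \<alpha> \<beta>"
    if simple: "lts_simple sc tp"
  proof (intro ballI)
    fix \<alpha> \<beta> assume a: "\<alpha> \<in> Lambda1 sc H" and b: "\<beta> \<in> Lambda1 sc H"
    have cases: "F.I \<gamma> = lts_J sc tp \<or> F.I \<gamma> = UNIV" if g: "\<gamma> \<in> Lambda1 sc H" for \<gamma>
    proof -
      have id: "lts_ideal sc tp (F.I \<gamma>)" using F.I_ideal[OF g] .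
      obtain t where t: "t \<in> Troot sc H \<gamma>" "t \<noteq> 0" using F.T_ne[OF g g] by blast
      have "t \<in> F.I \<gamma>" using F.TK_I[OF g F.K_self[OF g] t(1)] .
      then have "F.I \<gamma> \<noteq> {0}" using t(2) by blast
      then show ?thesis using simple id unfolding lts_simple_def by blast
    qed
    have inI: "t \<in> Troot sc H \<beta> \<Longrightarrow> t \<noteq> 0 \<Longrightarrow> t \<in> F.I \<alpha> \<Longrightarrow> F.E \<alpha> \<beta>" for t
      using F.DIR[OF a _ b] unfolding F.K_def by blast
    obtain tb where tb: "tb \<in> Troot sc H \<beta>" "tb \<noteq> 0" using F.T_ne[OF b b] by blast
    obtain ta where ta: "ta \<in> Troot sc H \<alpha>" "ta \<noteq> 0" using F.T_ne[OF a a] by blast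
    have tbI: "tb \<in> F.I \<beta>" using F.TK_I[OF b F.K_self[OF b] tb(1)] .
    have taI: "ta \<in> F.I \<alpha>" using F.TK_I[OF a F.K_self[OF a] ta(1)] .
    have "F.E \<alpha> \<beta>"
    proof (cases "F.I \<alpha> = UNIV")
      case True then show ?thesis using inI[OF tb] by blast
    next
      case False
      then have Ja: "F.I \<alpha> = lts_J sc tp" using cases[OF a] by blast
      show ?thesis
      proof (cases "F.I \<beta> = UNIV")
        case True
        then have "F.E \<beta> \<alpha>" using F.DIR[OF b ta(1) a ta(2)] unfolding F.K_def by blast
        then show ?thesis by (rule F.E_sym)
      next
        case False
        then have "F.I \<beta> = lts_J sc tp" using cases[OF b] by blast
        then have "tb \<in> F.I \<alpha>" using Ja tbI by simp
        then show ?thesis using inI[OF tb] by blast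
      qed
    qed
    then show "connected_roots sc tp H \<alpha> \<beta>" using F.conn_E by blast
  qed
  show ?thesis using P1 P2 by blast
qed

end
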